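(* Let $\Omega=\bigcup_{j=1}^n (a_j,b_j)\subseteq\mathbb{R}$ be a finite union of open intervals of total length $1$, and let $\Lambda\subseteq\mathbb{R}$ be a spectrum of $\Omega$. Define $\phi:\mathbb{R}\to\mathbb{C}^{2n}$ by $$\phi(x)=\left(e^{-2\pi i a_1 x},\ldots,e^{-2\pi i a_n x},e^{-2\pi i b_1 x},\ldots,e^{-2\pi i b_n x}\right).$$ Call a subset $B\subseteq\Lambda$ a generating set if $\operatorname{span}\{\phi(b): b\in B\}=\operatorname{span}\{\phi(\lambda):\lambda\in\Lambda\}$ (complex linear spans in $\mathbb{C}^{2n}$). Then there is a finite $T>0$ such that for every $x\in\mathbb{R}$ the set $\Lambda\cap(x,x+T)$ is a generating set.
   Context: A set $\Lambda\subseteq\mathbb{R}$ is a spectrum of a measurable set $\Omega\subseteq\mathbb{R}$ of Lebesgue measure $1$ if the exponentials $e_\lambda(x)=e^{2\pi i\lambda x}$, $\lambda\in\Lambda$, form a complete orthonormal system in $L^2(\Omega)$ (with inner product $\langle f,g\rangle=\int_\Omega f\overline{g}$). *)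

theory Defs
  imports "HOL-Analysis.Analysis"
begin

definition expo :: "real \<Rightarrow> real \<Rightarrow> complex" where
  "expo l x = exp (2 * complex_of_real pi * \<i> * complex_of_real (l * x))"

text \<open>Lambda is a spectrum of Omega: the exponentials e_lambda, lambda in Lambda, form a
  complete orthonormal system in L^2(Omega) (Lebesgue measure, inner product
  integral of f times conjugate g over Omega).\<close>
definition is_spectrum :: "real set \<Rightarrow> real set \<Rightarrow> bool" where
  "is_spectrum \<Omega> \<Lambda> \<longleftrightarrow>
     \<Omega> \<in> sets lebesgue \<and>
     (\<forall>l\<in>\<Lambda>. \<forall>m\<in>\<Lambda>.
        (LINT x:\<Omega>|lebesgue. expo l x * cnj (expo m x)) = (if l = m then 1 else 0)) \<and>
     (\<forall>f :: real \<Rightarrow> complex.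
        f \<in> borel_measurable lebesgue \<and> set_integrable lebesgue \<Omega> (\<lambda>x. (norm (f x))\<^sup>2) \<and>
        (\<forall>l\<in>\<Lambda>. (LINT x:\<Omega>|lebesgue. f x * cnj (expo l x)) = 0)
        \<longrightarrow> (AE x in lebesgue. x \<in> \<Omega> \<longrightarrow> f x = 0))"

text \<open>Vectors of C^(2n) are represented as functions nat => complex; coordinates
  0..n-1 correspond to a_1..a_n and n..2n-1 to b_1..b_n (all other coordinates are 0).\<close>
definition phi :: "nat \<Rightarrow> (nat \<Rightarrow> real) \<Rightarrow> (nat \<Rightarrow> real) \<Rightarrow> real \<Rightarrow> nat \<Rightarrow> complex" where
  "phi n a b x = (\<lambda>k. if k < n then exp (- 2 * complex_of_real pi * \<i> * complex_of_real (a k * x))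
                     else if k < 2 * n then exp (- 2 * complex_of_real pi * \<i> * complex_of_real (b (k - n) * x))
                     else 0)"

definition cspan :: "(nat \<Rightarrow> complex) set \<Rightarrow> (nat \<Rightarrow> complex) set" where
  "cspan S = {w. \<exists>F c. finite F \<and> F \<subseteq> S \<and> w = (\<lambda>k. \<Sum>v\<in>F. c v * v k)}"

definition generating_set :: "nat \<Rightarrow> (nat \<Rightarrow> real) \<Rightarrow> (nat \<Rightarrow> real) \<Rightarrow> real set \<Rightarrow> real set \<Rightarrow> bool" where
  "generating_set n a b \<Lambda> B \<longleftrightarrow> B \<subseteq> \<Lambda> \<and> cspan (phi n a b ` B) = cspan (phi n a b ` \<Lambda>)"

end

theory Submission
  imports Defs "HOL-Library.Function_Algebras"
begin


definition scl :: "complex \<Rightarrow> (nat \<Rightarrow> complex) \<Rightarrow> (nat \<Rightarrow> complex)" where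
  "scl c v = (\<lambda>k. c * v k)"

lemma vs_scl: "vector_space scl"
  by unfold_locales (auto simp: scl_def fun_eq_iff algebra_simps)

interpretation FV: vector_space scl by (rule vs_scl)
interpretation FVP: vector_space_pair scl scl by unfold_locales

lemma sum_fun_app: "(\<Sum>v\<in>F. (f v :: nat \<Rightarrow> complex)) k = (\<Sum>v\<in>F. f v k)"
  by (induction F rule: infinite_finite_induct) auto

lemma cspan_eq: "cspan S = FV.span S"
proof
  show "cspan S \<subseteq> FV.span S"
  proof
    fix w assume "w \<in> cspan S"
    then obtain F c where F: "finite F" "F \<subseteq> S" and w: "w = (\<lambda>k. \<Sum>v\<in>F. c v * v k)"
      unfolding cspan_def by blast
    have "w = (\<Sum>v\<in>F. scl (c v) v)"
      unfolding w by (auto simp: fun_eq_iff sum_fun_app scl_def)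
    also have "\<dots> \<in> FV.span S"
      using F by (intro FV.span_sum FV.span_scale) (auto intro: FV.span_base)
    finally show "w \<in> FV.span S" .
  qed
  show "FV.span S \<subseteq> cspan S"
  proof
    fix w assume "w \<in> FV.span S"
    then obtain u where u: "finite {v. u v \<noteq> 0}" "\<forall>v. u v \<noteq> 0 \<longrightarrow> v \<in> S"
      and w: "w = (\<Sum>v | u v \<noteq> 0. scl (u v) v)"
      unfolding FV.span_explicit' by blast
    show "w \<in> cspan S"
      unfolding cspan_def
      by (rule CollectI, rule exI[of _ "{v. u v \<noteq> 0}"], rule exI[of _ u])
         (use u in \<open>auto simp: w fun_eq_iff sum_fun_app scl_def\<close>)
  qed
qed

lemma dimcount:
  assumes "finite X" "FV.independent X" "Vector_Spaces.linear scl scl f" "finite U" "f ` X \<subseteq> FV.span U"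
    "\<forall>x\<in>FV.span X. f x = 0 \<longrightarrow> x = 0"
  shows "card X \<le> card U"
proof -
  have inj: "inj_on f (FV.span X)"
    using FVP.linear_inj_on_iff_eq_0[OF assms(3) FV.subspace_span] assms(6) by auto
  have ind: "FV.independent (f ` X)"
    by (rule FVP.linear_independent_injective_image[OF assms(3) assms(2) inj])
  have "card (f ` X) = card X"
    by (rule card_image, rule inj_on_subset[OF inj FV.span_superset])
  with FV.independent_span_bound[OF assms(4) ind assms(5)] show ?thesis by simp
qed

definition unit :: "nat \<Rightarrow> nat \<Rightarrow> complex" where "unit j = (\<lambda>k. if k = j then 1 else 0)"

lemma unit_inj: "inj unit"
  by (auto simp: inj_on_def unit_def fun_eq_iff split: if_splits)

lemma card_units: "card (unit ` {..<m}) = m"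
  using unit_inj by (simp add: card_image inj_on_subset)

lemma supported_in_span_units:
  assumes "\<forall>k\<ge>m. v k = 0" shows "v \<in> FV.span (unit ` {..<m})"
proof -
  have "v = (\<Sum>j<m. scl (v j) (unit j))"
    using assms by (auto simp: fun_eq_iff sum_fun_app scl_def unit_def if_distrib sum.delta sum.delta' cong: if_cong)
  also have "\<dots> \<in> FV.span (unit ` {..<m})"
    by (intro FV.span_sum FV.span_scale FV.span_base) auto
  finally show ?thesis .
qed

lemma span_units_supported:
  assumes "v \<in> FV.span (unit ` {..<m})" shows "\<forall>k\<ge>m. v k = 0"
proof -
  have "FV.subspace {v. \<forall>k\<ge>m. v k = 0}"
    unfolding FV.subspace_def by (auto simp: scl_def)
  moreover have "unit ` {..<m} \<subseteq> {v. \<forall>k\<ge>m. v k = 0}" by (auto simp: unit_def)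
  ultimately show ?thesis using FV.span_minimal assms by blast
qed

lemma independent_units: "FV.independent (unit ` {..<m})"
proof -
  have "FV.independent (unit ` {..<m})" if "\<And>m. unit m \<notin> FV.span (unit ` {..<m})" for m :: nat
  proof (induction m)
    case 0 then show ?case by (simp add: FV.independent_empty)
  next
    case (Suc m)
    have "unit ` {..<Suc m} = insert (unit m) (unit ` {..<m})" by (auto simp: lessThan_Suc)
    then show ?case using FV.independent_insertI[OF that Suc] by simp
  qed
  moreover have "unit m \<notin> FV.span (unit ` {..<m})" for m
  proof
    assume "unit m \<in> FV.span (unit ` {..<m})"
    from span_units_supported[OF this] have "unit m m = 0" by blast
    then show False by (simp add: unit_def)
  qed
  ultimately show ?thesis by blast
qed

definition Qf :: "nat \<Rightarrow> (nat \<Rightarrow> complex) \<Rightarrow> (nat \<Rightarrow> complex) \<Rightarrow> complex" where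
  "Qf n v w = (\<Sum>j<n. cnj (v (n+j)) * w (n+j) - cnj (v j) * w j)"

lemma Qf_add_right: "Qf n v (w1 + w2) = Qf n v w1 + Qf n v w2"
  unfolding Qf_def sum.distrib[symmetric] by (rule sum.cong) (simp_all add: algebra_simps)
lemma Qf_scl_right: "Qf n v (scl c w) = c * Qf n v w"
  by (simp add: Qf_def scl_def sum_distrib_left algebra_simps)
lemma Qf_add_left: "Qf n (v1 + v2) w = Qf n v1 w + Qf n v2 w"
  unfolding Qf_def sum.distrib[symmetric] by (rule sum.cong) (simp_all add: algebra_simps)
lemma Qf_scl_left: "Qf n (scl c v) w = cnj c * Qf n v w"
  by (simp add: Qf_def scl_def sum_distrib_left algebra_simps)
lemma Qf_zero_right: "Qf n v 0 = 0" by (simp add: Qf_def)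
lemma Qf_zero_left: "Qf n 0 w = 0" by (simp add: Qf_def)

lemma Qf_sub_right: "FV.subspace {w. Qf n v w = 0}"
  unfolding FV.subspace_def by (simp add: Qf_add_right Qf_scl_right Qf_zero_right)

lemma Qf_sub_left: "FV.subspace {v. Qf n v w = 0}"
  unfolding FV.subspace_def by (simp add: Qf_add_left Qf_scl_left Qf_zero_left)

lemma Qf_span:
  assumes "\<forall>v\<in>S. \<forall>w\<in>S. Qf n v w = 0" "v \<in> FV.span S" "w \<in> FV.span S"
  shows "Qf n v w = 0"
proof -
  have "\<forall>w\<in>FV.span S. Qf n v w = 0" if "v \<in> S" for v
    using FV.span_induct[OF _ Qf_sub_right, of _ S n v] assms(1) that by blast
  then have "\<forall>v\<in>FV.span S. Qf n v w = 0"
    using FV.span_induct[OF _ Qf_sub_left, of _ S n w] assms(3) by blast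
  then show ?thesis using assms(2) by blast
qed

lemma supp_span:
  assumes "\<forall>v\<in>S. \<forall>k\<ge>m. v k = 0" "x \<in> FV.span S" shows "\<forall>k\<ge>m. x k = 0"
proof -
  have "FV.subspace {v. \<forall>k\<ge>m. v k = 0}"
    unfolding FV.subspace_def by (auto simp: scl_def)
  then show ?thesis using FV.span_minimal[of S "{v. \<forall>k\<ge>m. v k = 0}"] assms by blast
qed

definition proj :: "nat \<Rightarrow> (nat \<Rightarrow> complex) \<Rightarrow> (nat \<Rightarrow> complex)" where
  "proj n v = (\<lambda>k. if k < n then v k else 0)"

lemma linear_proj: "Vector_Spaces.linear scl scl (proj n)"
  unfolding Vector_Spaces.linear_iff by (auto simp: vs_scl simp: proj_def scl_def fun_eq_iff)

lemma iso_bound: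
  assumes "finite X" "FV.independent X" "\<forall>v\<in>X. \<forall>w\<in>X. Qf n v w = 0" "\<forall>v\<in>X. \<forall>k\<ge>2*n. v k = 0"
  shows "card X \<le> n"
proof -
  have "card X \<le> card (unit ` {..<n})"
  proof (rule dimcount[OF assms(1,2) linear_proj])
    show "proj n ` X \<subseteq> FV.span (unit ` {..<n})"
      by (auto intro!: supported_in_span_units simp: proj_def)
    show "\<forall>x\<in>FV.span X. proj n x = 0 \<longrightarrow> x = 0"
    proof (intro ballI impI)
      fix x assume x: "x \<in> FV.span X" and p: "proj n x = 0"
      have lo: "x k = 0" if "k < n" for k using p that by (auto simp: proj_def fun_eq_iff dest: spec[of _ k])
      have "Qf n x x = 0" using Qf_span[OF assms(3) x x] .
      moreover have "Qf n x x = of_real (\<Sum>j<n. (cmod (x (n+j)))\<^sup>2)"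
        unfolding Qf_def of_real_sum
      proof (rule sum.cong)
        fix j assume "j \<in> {..<n}"
        show "cnj (x (n + j)) * x (n + j) - cnj (x j) * x j = of_real ((cmod (x (n+j)))\<^sup>2)"
          using lo[of j] complex_norm_square[of "x (n+j)"] \<open>j \<in> {..<n}\<close> by (simp add: mult.commute)
      qed simp
      ultimately have "(\<Sum>j<n. (cmod (x (n+j)))\<^sup>2) = 0" by (metis of_real_eq_0_iff)
      then have hi: "x (n+j) = 0" if "j < n" for j
        using that by (subst (asm) sum_nonneg_eq_0_iff) auto
      have z: "x k = 0" if "k \<ge> 2*n" for k using supp_span[OF assms(4) x] that by blast
      show "x = 0"
      proof
        fix k show "x k = 0 k"
          using lo[of k] hi[of "k - n"] z[of k] by (cases "k < n"; cases "k < 2*n") auto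
      qed
    qed
  qed simp
  then show ?thesis by (simp add: card_units)
qed


definition L2 :: "'a measure \<Rightarrow> ('a \<Rightarrow> complex) \<Rightarrow> bool" where
  "L2 M g \<longleftrightarrow> g \<in> borel_measurable M \<and> integrable M (\<lambda>x. (cmod (g x))\<^sup>2)"

definition ip :: "'a measure \<Rightarrow> ('a \<Rightarrow> complex) \<Rightarrow> ('a \<Rightarrow> complex) \<Rightarrow> complex" where
  "ip M u v = (LINT x|M. u x * cnj (v x))"

definition nr :: "'a measure \<Rightarrow> ('a \<Rightarrow> complex) \<Rightarrow> real" where
  "nr M u = (LINT x|M. (cmod (u x))\<^sup>2)"

lemma meas_cnj: "f \<in> borel_measurable M \<Longrightarrow> (\<lambda>x. cnj (f x)) \<in> borel_measurable M"
  by (rule measurable_compose[of f M borel cnj borel]) (auto intro: borel_measurable_continuous_onI continuous_intros)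

lemma sq_ab: fixes a b :: real shows "2*a*b \<le> a\<^sup>2 + b\<^sup>2"
proof -
  have "0 \<le> (a-b)\<^sup>2" by simp
  thus ?thesis by (simp add: power2_diff)
qed

lemma sq_sum2: fixes a b :: real shows "(a+b)\<^sup>2 \<le> 2*a\<^sup>2 + 2*b\<^sup>2"
  using sq_ab[of a b] by (simp add: power2_sum)

lemma L2_add: assumes "L2 M u" "L2 M v" shows "L2 M (\<lambda>x. u x + v x)"
  unfolding L2_def
proof
  show "(\<lambda>x. u x + v x) \<in> borel_measurable M" using assms by (auto simp: L2_def)
  show "integrable M (\<lambda>x. (cmod (u x + v x))\<^sup>2)"
  proof (rule Bochner_Integration.integrable_bound)
    show "integrable M (\<lambda>x. 2 * (cmod (u x))\<^sup>2 + 2 * (cmod (v x))\<^sup>2)"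
      using assms by (auto simp: L2_def)
    show "(\<lambda>x. (cmod (u x + v x))\<^sup>2) \<in> borel_measurable M" using assms by (auto simp: L2_def)
    show "AE x in M. norm ((cmod (u x + v x))\<^sup>2) \<le> norm (2 * (cmod (u x))\<^sup>2 + 2 * (cmod (v x))\<^sup>2)"
    proof (rule AE_I2)
      fix x
      have "cmod (u x + v x) \<le> cmod (u x) + cmod (v x)" by (rule norm_triangle_ineq)
      then have "(cmod (u x + v x))\<^sup>2 \<le> (cmod (u x) + cmod (v x))\<^sup>2"
        by (intro power_mono) auto
      also have "\<dots> \<le> 2 * (cmod (u x))\<^sup>2 + 2 * (cmod (v x))\<^sup>2"
        by (rule sq_sum2)
      finally show "norm ((cmod (u x + v x))\<^sup>2) \<le> norm (2 * (cmod (u x))\<^sup>2 + 2 * (cmod (v x))\<^sup>2)"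
        by simp
    qed
  qed
qed

lemma L2_cmult: assumes "L2 M u" shows "L2 M (\<lambda>x. c * u x)"
  using assms by (auto simp: L2_def norm_mult power_mult_distrib)

lemma L2_minus: assumes "L2 M u" shows "L2 M (\<lambda>x. - u x)"
  using L2_cmult[OF assms, of "-1"] by simp

lemma L2_diff: assumes "L2 M u" "L2 M v" shows "L2 M (\<lambda>x. u x - v x)"
  using L2_add[OF assms(1) L2_minus[OF assms(2)]] by simp

lemma L2_zero: "L2 M (\<lambda>x. 0)" by (simp add: L2_def)

lemma L2_sum: assumes "\<And>i. i \<in> F \<Longrightarrow> L2 M (f i)" shows "L2 M (\<lambda>x. \<Sum>i\<in>F. f i x)"
  using assms
proof (induction F rule: infinite_finite_induct)
  case (insert i F) then show ?case by (simp add: L2_add)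
qed (auto simp: L2_zero)

lemma L2_meas: "L2 M u \<Longrightarrow> u \<in> borel_measurable M" by (simp add: L2_def)

lemma ip_integrable: assumes "L2 M u" "L2 M v" shows "integrable M (\<lambda>x. u x * cnj (v x))"
proof (rule Bochner_Integration.integrable_bound)
  show "integrable M (\<lambda>x. (cmod (u x))\<^sup>2 + (cmod (v x))\<^sup>2)" using assms by (auto simp: L2_def)
  show "(\<lambda>x. u x * cnj (v x)) \<in> borel_measurable M" using assms by (auto simp: L2_def intro!: borel_measurable_times meas_cnj)
  show "AE x in M. norm (u x * cnj (v x)) \<le> norm ((cmod (u x))\<^sup>2 + (cmod (v x))\<^sup>2)"
  proof (rule AE_I2)
    fix x
    have "2 * cmod (u x) * cmod (v x) \<le> (cmod (u x))\<^sup>2 + (cmod (v x))\<^sup>2" by (rule sq_ab)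
    moreover have "0 \<le> cmod (u x) * cmod (v x)" by simp
    moreover have "norm (u x * cnj (v x)) = cmod (u x) * cmod (v x)" by (simp add: norm_mult)
    moreover have "norm ((cmod (u x))\<^sup>2 + (cmod (v x))\<^sup>2) = (cmod (u x))\<^sup>2 + (cmod (v x))\<^sup>2" by simp
    ultimately show "norm (u x * cnj (v x)) \<le> norm ((cmod (u x))\<^sup>2 + (cmod (v x))\<^sup>2)"
      by linarith
  qed
qed

lemma ip_add_left: assumes "L2 M u" "L2 M v" "L2 M w"
  shows "ip M (\<lambda>x. u x + v x) w = ip M u w + ip M v w"
  unfolding ip_def using ip_integrable[OF assms(1,3)] ip_integrable[OF assms(2,3)]
  by (simp add: distrib_right)

lemma ip_diff_left: assumes "L2 M u" "L2 M v" "L2 M w"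
  shows "ip M (\<lambda>x. u x - v x) w = ip M u w - ip M v w"
  unfolding ip_def using ip_integrable[OF assms(1,3)] ip_integrable[OF assms(2,3)]
  by (simp add: left_diff_distrib)

lemma ip_cmult_left: "ip M (\<lambda>x. c * u x) w = c * ip M u w"
  unfolding ip_def by (simp add: mult.assoc)

lemma ip_sum_left: assumes "finite F" "\<And>i. i \<in> F \<Longrightarrow> L2 M (f i)" "L2 M w"
  shows "ip M (\<lambda>x. \<Sum>i\<in>F. a i * f i x) w = (\<Sum>i\<in>F. a i * ip M (f i) w)"
proof -
  have "ip M (\<lambda>x. \<Sum>i\<in>F. a i * f i x) w = (LINT x|M. (\<Sum>i\<in>F. a i * (f i x * cnj (w x))))"
    unfolding ip_def by (simp add: sum_distrib_right mult.assoc)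
  also have "\<dots> = (\<Sum>i\<in>F. (LINT x|M. a i * (f i x * cnj (w x))))"
    using assms by (intro Bochner_Integration.integral_sum) (auto intro!: integrable_mult_right ip_integrable)
  also have "\<dots> = (\<Sum>i\<in>F. a i * ip M (f i) w)"
    unfolding ip_def by simp
  finally show ?thesis .
qed

lemma ip_cnj: "ip M v u = cnj (ip M u v)"
  unfolding ip_def Bochner_Integration.integral_cnj[of M "\<lambda>x. u x * cnj (v x)", symmetric] by (simp add: mult.commute)

lemma ip_self: "ip M u u = of_real (nr M u)"
  unfolding ip_def nr_def integral_complex_of_real[symmetric]
  by (rule Bochner_Integration.integral_cong) (simp_all, metis complex_norm_square of_real_power)

lemma nr_nonneg: "0 \<le> nr M u" unfolding nr_def by simp

lemma ons_ip:
  assumes EL2: "\<forall>i\<in>I. L2 M (E i)" and orth: "\<forall>i\<in>I. \<forall>j\<in>I. ip M (E i) (E j) = (if i = j then 1 else 0)"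
    and F: "finite F" "F \<subseteq> I" and j: "j \<in> I"
  shows "ip M (\<lambda>x. \<Sum>i\<in>F. a i * E i x) (E j) = (if j \<in> F then a j else 0)"
proof -
  have "ip M (\<lambda>x. \<Sum>i\<in>F. a i * E i x) (E j) = (\<Sum>i\<in>F. a i * ip M (E i) (E j))"
    using assms by (intro ip_sum_left) auto
  also have "\<dots> = (\<Sum>i\<in>F. if i = j then a i else 0)" using assms by (intro sum.cong) auto
  also have "\<dots> = (if j \<in> F then a j else 0)" using F by (simp add: sum.delta)
  finally show ?thesis .
qed

lemma ons_nr:
  assumes EL2: "\<forall>i\<in>I. L2 M (E i)" and orth: "\<forall>i\<in>I. \<forall>j\<in>I. ip M (E i) (E j) = (if i = j then 1 else 0)"
    and F: "finite F" "F \<subseteq> I"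
  shows "nr M (\<lambda>x. \<Sum>i\<in>F. a i * E i x) = (\<Sum>i\<in>F. (cmod (a i))\<^sup>2)"
proof -
  let ?P = "\<lambda>x. \<Sum>i\<in>F. a i * E i x"
  have L: "L2 M ?P" using assms by (intro L2_sum L2_cmult) auto
  have "complex_of_real (nr M ?P) = ip M ?P ?P" by (simp add: ip_self)
  also have "\<dots> = (\<Sum>i\<in>F. a i * ip M (E i) ?P)"
    using assms L by (intro ip_sum_left) auto
  also have "\<dots> = (\<Sum>i\<in>F. a i * cnj (a i))"
  proof (rule sum.cong)
    fix i assume i: "i \<in> F"
    have "ip M (E i) ?P = cnj (ip M ?P (E i))" by (rule ip_cnj)
    also have "\<dots> = cnj (a i)" using ons_ip[OF EL2 orth F, of i a] i F by auto
    finally show "a i * ip M (E i) ?P = a i * cnj (a i)" by simp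
  qed simp
  also have "\<dots> = of_real (\<Sum>i\<in>F. (cmod (a i))\<^sup>2)"
    unfolding of_real_sum by (rule sum.cong) (simp_all, metis complex_norm_square of_real_power)
  finally show ?thesis by (metis of_real_eq_iff)
qed

lemma ennreal_term_le_suminf: "(f k::ennreal) \<le> (\<Sum>i. f i)"
  using sum_le_suminf[of f "{k}"] by (simp add: summableI)

lemma ennreal_enn2real_le': "ennreal (enn2real x) \<le> x"
  by (cases x) auto

lemma parseval_lb:
  fixes M :: "'a measure" and E :: "'i \<Rightarrow> 'a \<Rightarrow> complex"
  assumes EL2: "\<forall>i\<in>I. L2 M (E i)"
    and orth: "\<forall>i\<in>I. \<forall>j\<in>I. ip M (E i) (E j) = (if i = j then 1 else 0)"
    and compl: "\<forall>g. L2 M g \<and> (\<forall>i\<in>I. ip M g (E i) = 0) \<longrightarrow> (AE x in M. g x = 0)"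
    and f: "L2 M f"
    and B: "\<forall>F. finite F \<and> F \<subseteq> I \<longrightarrow> (\<Sum>i\<in>F. (cmod (ip M f (E i)))\<^sup>2) \<le> B"
  shows "nr M f \<le> B"
proof (rule ccontr)
  assume "\<not> nr M f \<le> B"
  then have fB: "B < nr M f" by simp
  define c where "c i = ip M f (E i)" for i
  define S where "S F = (\<Sum>i\<in>F. (cmod (c i))\<^sup>2)" for F
  define SS where "SS = S ` {F. finite F \<and> F \<subseteq> I}"
  define s where "s = Sup SS"
  have bdd: "bdd_above SS" using B unfolding SS_def S_def c_def bdd_above_def by auto
  have ne: "SS \<noteq> {}" unfolding SS_def by auto
  have Sle: "S F \<le> s" if "finite F" "F \<subseteq> I" for F
    unfolding s_def using bdd that by (intro cSup_upper) (auto simp: SS_def)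
  have sB: "s \<le> B" unfolding s_def using ne B by (intro cSup_least) (auto simp: SS_def S_def c_def)
  have "\<exists>F. finite F \<and> F \<subseteq> I \<and> s - (1/16)^k < S F" for k :: nat
  proof -
    have "s - (1/16)^k < s" by simp
    then obtain y where "y \<in> SS" "s - (1/16)^k < y" using less_cSup_iff[OF ne bdd] unfolding s_def by blast
    then show ?thesis unfolding SS_def by auto
  qed
  then obtain G where G: "\<And>k. finite (G k) \<and> G k \<subseteq> I \<and> s - (1/16)^k < S (G k)" by metis
  define F where "F k = (\<Union>m\<le>k. G m)" for k
  have Ffin: "finite (F k)" for k using G by (auto simp: F_def)
  have FI: "F k \<subseteq> I" for k using G by (auto simp: F_def)
  have Fmono: "F k \<subseteq> F m" if "k \<le> m" for k m unfolding F_def using that by (intro UN_mono) auto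
  have Smono: "S A \<le> S A'" if "finite A'" "A \<subseteq> A'" for A A'
    unfolding S_def using that by (intro sum_mono2) auto
  have SF: "s - (1/16)^k < S (F k)" for k
  proof -
    have "G k \<subseteq> F k" unfolding F_def by auto
    with G[of k] Smono[OF Ffin this] show ?thesis by linarith
  qed
  have SFs: "S (F k) \<le> s" for k using Sle Ffin FI by blast
  define P where "P k x = (\<Sum>i\<in>F k. c i * E i x)" for k x
  define g where "g k x = f x - P k x" for k x
  define d where "d k x = g (Suc k) x - g k x" for k x
  have PL2: "L2 M (P k)" for k unfolding P_def using EL2 FI by (intro L2_sum L2_cmult) auto
  have gL2: "L2 M (g k)" for k unfolding g_def using f PL2 by (intro L2_diff) auto
  have dL2: "L2 M (d k)" for k unfolding d_def using gL2 by (intro L2_diff) auto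
  have d_eq: "d k = (\<lambda>x. - (\<Sum>i\<in>F (Suc k) - F k. c i * E i x))" for k
  proof -
    have "P (Suc k) x = (\<Sum>i\<in>F (Suc k) - F k. c i * E i x) + P k x" for x
      unfolding P_def using Fmono[of k "Suc k"] Ffin by (simp add: sum.subset_diff[of "F k" "F (Suc k)"])
    then show ?thesis by (auto simp: d_def g_def fun_eq_iff)
  qed
  have nrd: "nr M (d k) \<le> (1/16)^k" for k
  proof -
    have "nr M (d k) = nr M (\<lambda>x. \<Sum>i\<in>F (Suc k) - F k. c i * E i x)"
      by (simp add: d_eq nr_def)
    also have "\<dots> = S (F (Suc k) - F k)" unfolding S_def
      using Ffin FI by (intro ons_nr[OF EL2 orth]) auto
    also have "\<dots> = S (F (Suc k)) - S (F k)" unfolding S_def using Fmono[of k "Suc k"] Ffin by (simp add: sum_diff)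
    also have "\<dots> \<le> (1/16)^k" using SF[of k] SFs[of "Suc k"] by linarith
    finally show ?thesis .
  qed
  have dmeas[measurable]: "d k \<in> borel_measurable M" for k using dL2 L2_meas by blast
  have gmeas[measurable]: "g k \<in> borel_measurable M" for k using gL2 L2_meas by blast
  define H where "H x = (\<Sum>k. ennreal (4^k * (cmod (d k x))\<^sup>2))" for x
  have Hmeas[measurable]: "H \<in> borel_measurable M" unfolding H_def by measurable
  have dint: "integrable M (\<lambda>x. 4^k * (cmod (d k x))\<^sup>2)" for k using dL2[of k] by (simp add: L2_def)
  have intH: "(\<integral>\<^sup>+x. H x \<partial>M) \<le> ennreal (4/3)"
  proof -
    have "(\<integral>\<^sup>+x. H x \<partial>M) = (\<Sum>k. \<integral>\<^sup>+x. ennreal (4^k * (cmod (d k x))\<^sup>2) \<partial>M)"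
      unfolding H_def by (rule nn_integral_suminf) measurable
    also have "\<dots> = (\<Sum>k. ennreal (4^k * nr M (d k)))"
      by (rule suminf_cong, subst nn_integral_eq_integral[OF dint]) (auto simp: nr_def)
    also have "\<dots> \<le> (\<Sum>k. ennreal ((1/4)^k))"
    proof (intro suminf_le summableI)
      fix k :: nat
      have "4^k * nr M (d k) \<le> 4^k * (1/16)^k" using nrd[of k] by (intro mult_left_mono) auto
      also have "\<dots> = (1/4)^k" by (subst power_mult_distrib[symmetric]) simp
      finally show "ennreal (4^k * nr M (d k)) \<le> ennreal ((1/4)^k)" by (rule ennreal_leI)
    qed
    also have "\<dots> = ennreal (4/3)"
    proof (rule suminf_ennreal_eq)
      show "(\<lambda>k. (1/4::real)^k) sums (4/3)" using geometric_sums[of "1/4::real"] by simp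
    qed simp
    finally show ?thesis .
  qed
  have Hfin: "AE x in M. H x \<noteq> \<infinity>"
    by (rule nn_integral_PInf_AE[OF Hmeas]) (use intH in \<open>auto simp: top_unique\<close>)
  define h where "h x = enn2real (H x)" for x
  have hmeas[measurable]: "h \<in> borel_measurable M" unfolding h_def by measurable
  have hpos: "0 \<le> h x" for x by (simp add: h_def)
  have hint: "integrable M h"
  proof (rule integrableI_nonneg)
    have "(\<integral>\<^sup>+x. ennreal (h x) \<partial>M) \<le> (\<integral>\<^sup>+x. H x \<partial>M)"
      unfolding h_def by (intro nn_integral_mono ennreal_enn2real_le')
    also have "\<dots> < \<infinity>" using intH by (simp add: le_less_trans)
    finally show "(\<integral>\<^sup>+x. ennreal (h x) \<partial>M) < \<infinity>" .
  qed (auto simp: hpos)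
  have dbound: "cmod (d k x) \<le> sqrt (h x) * (1/2)^k" if "H x \<noteq> \<infinity>" for k x
  proof -
    have "ennreal (4^k * (cmod (d k x))\<^sup>2) \<le> H x"
      unfolding H_def by (rule ennreal_term_le_suminf)
    also have "H x = ennreal (h x)"
    proof -
      have "H x < top" using that by (simp add: less_top[symmetric])
      then show ?thesis unfolding h_def by (rule ennreal_enn2real[symmetric])
    qed
    finally have 1: "4^k * (cmod (d k x))\<^sup>2 \<le> h x" using ennreal_le_iff[OF hpos[of x]] by blast
    have 2: "(2^k * cmod (d k x))\<^sup>2 = (2^k * 2^k) * (cmod (d k x))\<^sup>2" by (simp add: power2_eq_square algebra_simps)
    have 3: "(2::real)^k * 2^k = 4^k" by (simp flip: power_mult_distrib)
    have "(2^k * cmod (d k x))\<^sup>2 \<le> h x" using 1 unfolding 2 3 .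
    then have "2^k * cmod (d k x) \<le> sqrt (h x)" by (rule real_le_rsqrt)
    then show ?thesis by (simp add: power_divide divide_simps mult.commute)
  qed
  have gsum: "g k x = g 0 x + (\<Sum>m<k. d m x)" for k x
    unfolding d_def by (simp add: sum_lessThan_telescope[of "\<lambda>n. g n x"])
  define w where "w x = cmod (g 0 x) + 2 * sqrt (h x)" for x
  have gbound: "cmod (g k x) \<le> w x" if "H x \<noteq> \<infinity>" for k x
  proof -
    have A: "cmod (g k x) \<le> cmod (g 0 x) + (\<Sum>m<k. cmod (d m x))"
      unfolding gsum[of k x] using norm_triangle_ineq[of "g 0 x" "\<Sum>m<k. d m x"] norm_sum[of "\<lambda>m. d m x" "{..<k}"]
      by linarith
    have B: "(\<Sum>m<k. cmod (d m x)) \<le> sqrt (h x) * (\<Sum>m<k. (1/2)^m)"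
      unfolding sum_distrib_left by (intro sum_mono dbound that)
    have C: "(\<Sum>m<k. (1/2::real)^m) \<le> 2" by (simp add: sum_gp_strict)
    have D: "sqrt (h x) * (\<Sum>m<k. (1/2::real)^m) \<le> sqrt (h x) * 2" by (rule mult_left_mono[OF C]) (simp add: hpos)
    show ?thesis unfolding w_def using A B D by linarith
  qed
  have summ: "summable (\<lambda>m. d m x)" if "H x \<noteq> \<infinity>" for x
  proof (rule summable_norm_cancel, rule summable_comparison_test')
    show "summable (\<lambda>m. sqrt (h x) * (1/2)^m)" by (intro summable_mult summable_geometric) auto
    show "norm (norm (d m x)) \<le> sqrt (h x) * (1/2)^m" for m using dbound[OF that] by simp
  qed
  define gl where "gl x = (if H x \<noteq> \<infinity> then g 0 x + (\<Sum>m. d m x) else 0)" for x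
  have conv: "(\<lambda>k. g k x) \<longlonglongrightarrow> gl x" if "H x \<noteq> \<infinity>" for x
  proof -
    have e: "(\<lambda>k. g k x) = (\<lambda>k. g 0 x + (\<Sum>m<k. d m x))" by (rule ext, rule gsum)
    show ?thesis unfolding e gl_def using that summ[OF that] by (auto intro!: tendsto_add summable_LIMSEQ)
  qed
  have glmeas[measurable]: "gl \<in> borel_measurable M"
  proof (rule borel_measurable_LIMSEQ_metric)
    define gg where "gg k x = (if H x \<noteq> \<infinity> then g k x else 0)" for k x
    show "gg k \<in> borel_measurable M" for k unfolding gg_def by measurable
    show "(\<lambda>k. gg k x) \<longlonglongrightarrow> gl x" for x
      using conv[of x] by (cases "H x \<noteq> \<infinity>") (auto simp: gg_def gl_def)
  qed
  have glbound: "cmod (gl x) \<le> w x" if "H x \<noteq> \<infinity>" for x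
    using tendsto_norm[OF conv[OF that]] gbound[OF that] by (intro LIMSEQ_le_const2) auto
  have g0L2: "integrable M (\<lambda>x. (cmod (g 0 x))\<^sup>2)" using gL2[of 0] by (simp add: L2_def)
  have wsq: "(w x)\<^sup>2 \<le> 2 * (cmod (g 0 x))\<^sup>2 + 8 * h x" for x
    using sq_sum2[of "cmod (g 0 x)" "2 * sqrt (h x)"] hpos[of x] by (simp add: w_def power_mult_distrib)
  have key: "cmod (u * cnj (v x)) \<le> (cmod (g 0 x))\<^sup>2 + 4 * h x + (cmod (v x))\<^sup>2"
    if "cmod u \<le> w x" for u v x
  proof -
    have "cmod (u * cnj (v x)) \<le> w x * cmod (v x)"
      using that by (simp add: norm_mult mult_right_mono)
    also have "2 * (w x * cmod (v x)) \<le> (w x)\<^sup>2 + (cmod (v x))\<^sup>2" using sq_ab[of "w x" "cmod (v x)"] by simp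
    then have "w x * cmod (v x) \<le> ((w x)\<^sup>2 + (cmod (v x))\<^sup>2) / 2" by simp
    also have "\<dots> \<le> (cmod (g 0 x))\<^sup>2 + 4 * h x + (cmod (v x))\<^sup>2"
    proof -
      have "(w x)\<^sup>2 + (cmod (v x))\<^sup>2 \<le> 2 * ((cmod (g 0 x))\<^sup>2 + 4 * h x + (cmod (v x))\<^sup>2)"
        using wsq[of x] zero_le_power2[of "cmod (v x)"] by (smt (verit))
      then show ?thesis by simp
    qed
    finally show ?thesis .
  qed
  have DCT: "(\<lambda>k. ip M (g k) v) \<longlonglongrightarrow> ip M gl v" if v: "L2 M v" for v
    unfolding ip_def
  proof (rule integral_dominated_convergence[where w = "\<lambda>x. (cmod (g 0 x))\<^sup>2 + 4 * h x + (cmod (v x))\<^sup>2"])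
    have [measurable]: "v \<in> borel_measurable M" using v by (simp add: L2_def)
    show "(\<lambda>x. gl x * cnj (v x)) \<in> borel_measurable M" by (intro borel_measurable_times meas_cnj) measurable
    show "(\<lambda>x. g k x * cnj (v x)) \<in> borel_measurable M" for k by (intro borel_measurable_times meas_cnj) measurable
    show "integrable M (\<lambda>x. (cmod (g 0 x))\<^sup>2 + 4 * h x + (cmod (v x))\<^sup>2)"
      using g0L2 hint v by (auto simp: L2_def)
    show "AE x in M. (\<lambda>k. g k x * cnj (v x)) \<longlonglongrightarrow> gl x * cnj (v x)"
      using Hfin by eventually_elim (auto intro!: tendsto_mult conv)
    show "AE x in M. norm (g k x * cnj (v x)) \<le> (cmod (g 0 x))\<^sup>2 + 4 * h x + (cmod (v x))\<^sup>2" for k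
      using Hfin by eventually_elim (rule key, rule gbound)
  qed
  have glL2: "L2 M gl" unfolding L2_def
  proof
    show "gl \<in> borel_measurable M" by measurable
    show "integrable M (\<lambda>x. (cmod (gl x))\<^sup>2)"
    proof (rule Bochner_Integration.integrable_bound)
      show "integrable M (\<lambda>x. 2 * (cmod (g 0 x))\<^sup>2 + 8 * h x)" using g0L2 hint by auto
      show "(\<lambda>x. (cmod (gl x))\<^sup>2) \<in> borel_measurable M" by measurable
      show "AE x in M. norm ((cmod (gl x))\<^sup>2) \<le> norm (2 * (cmod (g 0 x))\<^sup>2 + 8 * h x)"
        using Hfin
      proof eventually_elim
        case (elim x)
        have "(cmod (gl x))\<^sup>2 \<le> (w x)\<^sup>2" using glbound[OF elim] by (intro power_mono) auto
        then show ?case using wsq[of x] hpos[of x] by simp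
      qed
    qed
  qed
  have ipg: "ip M (g k) (E i) = (if i \<in> F k then 0 else c i)" if i: "i \<in> I" for k i
  proof -
    have "ip M (g k) (E i) = ip M f (E i) - ip M (P k) (E i)"
      unfolding g_def using f PL2 EL2 i by (intro ip_diff_left) auto
    also have "ip M (P k) (E i) = (if i \<in> F k then c i else 0)"
      unfolding P_def using Ffin FI i by (intro ons_ip[OF EL2 orth])
    finally show ?thesis by (simp add: c_def)
  qed
  have ci0: "c i = 0" if i: "i \<in> I" and nF: "\<forall>k. i \<notin> F k" for i
  proof (rule ccontr)
    assume "c i \<noteq> 0" then have pos: "0 < (cmod (c i))\<^sup>2" by simp
    obtain k where k: "(1/16::real)^k < (cmod (c i))\<^sup>2" using real_arch_pow_inv[OF pos, of "1/16"] by auto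
    have "S (insert i (F k)) = S (F k) + (cmod (c i))\<^sup>2" using nF Ffin unfolding S_def by simp
    moreover have "S (insert i (F k)) \<le> s" using Sle Ffin FI i by auto
    ultimately show False using SF[of k] k by linarith
  qed
  have glE: "ip M gl (E i) = 0" if i: "i \<in> I" for i
  proof -
    have "(\<lambda>k. ip M (g k) (E i)) \<longlonglongrightarrow> 0"
    proof (cases "\<exists>k. i \<in> F k")
      case True
      then obtain k0 where "i \<in> F k0" by blast
      then have "\<forall>k\<ge>k0. ip M (g k) (E i) = 0" using Fmono ipg[OF i] by auto
      then show ?thesis by (intro tendsto_eventually eventually_sequentiallyI) auto
    next
      case False
      then show ?thesis using ipg[OF i] ci0[OF i] by simp
    qed
    with DCT[of "E i"] EL2 i show ?thesis using LIMSEQ_unique by blast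
  qed
  have "AE x in M. gl x = 0" using compl glL2 glE by blast
  then have ipglf: "ip M gl f = 0" unfolding ip_def
    by (intro integral_eq_zero_AE) (auto elim: eventually_mono)
  have ipgf: "ip M (g k) f = of_real (nr M f - S (F k))" for k
  proof -
    have "ip M (g k) f = ip M f f - ip M (P k) f"
      unfolding g_def using f PL2 by (intro ip_diff_left) auto
    also have "ip M (P k) f = (\<Sum>i\<in>F k. c i * ip M (E i) f)"
      unfolding P_def using Ffin FI EL2 f by (intro ip_sum_left) auto
    also have "\<dots> = (\<Sum>i\<in>F k. of_real ((cmod (c i))\<^sup>2))"
      by (rule sum.cong) (simp_all add: ip_cnj[of M "E _" f] c_def, metis complex_norm_square of_real_power)
    also have "\<dots> = of_real (S (F k))" by (simp add: S_def)
    finally show ?thesis by (simp add: ip_self)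
  qed
  have "(\<lambda>k. Re (ip M (g k) f)) \<longlonglongrightarrow> Re (ip M gl f)" by (intro tendsto_Re DCT f)
  then have lim: "(\<lambda>k. nr M f - S (F k)) \<longlonglongrightarrow> 0" using ipgf ipglf by simp
  have lb: "nr M f - B \<le> nr M f - S (F n)" for n using SFs[of n] sB by linarith
  have "nr M f - B \<le> 0"
    by (rule LIMSEQ_le_const[OF lim]) (use lb in blast)
  with fB show False by simp
qed


definition Om :: "nat \<Rightarrow> (nat\<Rightarrow>real) \<Rightarrow> (nat\<Rightarrow>real) \<Rightarrow> real set" where
  "Om n a b = (\<Union>j<n. {a j<..<b j})"

definition pw :: "nat \<Rightarrow> (nat\<Rightarrow>real) \<Rightarrow> (nat\<Rightarrow>real) \<Rightarrow> (nat \<Rightarrow> complex) \<Rightarrow> real \<Rightarrow> complex" where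
  "pw n a b c x = (\<Sum>j<n. of_real (indicator {a j<..<b j} x) * c j)"

lemma Om_sets: "Om n a b \<in> sets lebesgue"
  unfolding Om_def by (intro sets.finite_UN) auto

lemma space_M: "space (restrict_space lebesgue (Om n a b)) = Om n a b"
  by (simp add: space_restrict_space)

lemma expo_add: "expo (s + t) x = expo s x * expo t x"
  unfolding expo_def by (simp add: algebra_simps flip: exp_add)

lemma cnj_expo: "cnj (expo m x) = expo (- m) x"
  unfolding expo_def by (simp add: exp_cnj)

lemma expo_mult_cnj: "expo l x * cnj (expo m x) = expo (l - m) x"
  unfolding cnj_expo expo_add[symmetric] by simp

lemma expo_eq: "expo t x = exp (\<i> * of_real (2 * pi * t * x))"
  unfolding expo_def by (simp add: algebra_simps)

lemma norm_expo[simp]: "cmod (expo t x) = 1"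
  unfolding expo_eq by (rule norm_exp_i_times)

lemma expo_zero[simp]: "expo 0 x = 1" by (simp add: expo_def)

lemma expo_comm: "expo t x = expo x t" by (simp add: expo_def mult.commute)

lemma continuous_expo: "continuous_on UNIV (expo t)"
  unfolding expo_def by (intro continuous_intros)

lemma expo_hasint:
  assumes "t \<noteq> 0" "a \<le> b"
  shows "((\<lambda>x. expo t x) has_integral (expo t b - expo t a) / (2 * of_real pi * \<i> * of_real t)) {a..b}"
proof -
  define C where "C = 2 * of_real pi * \<i> * (of_real t :: complex)"
  have C0: "C \<noteq> 0" using assms by (simp add: C_def)
  have e: "expo t x = exp (C * of_real x)" for x by (simp add: expo_def C_def mult.assoc)
  have "((\<lambda>x. exp (C * of_real x) / C) has_vector_derivative exp (C * of_real x)) (at x within {a..b})" for x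
  proof -
    have "((\<lambda>z. exp (C * z) / C) has_field_derivative exp (C * of_real x)) (at (of_real x))"
      using C0 by (auto intro!: derivative_eq_intros)
    then show ?thesis by (rule has_vector_derivative_real_field)
  qed
  from fundamental_theorem_of_calculus[OF assms(2) this]
  show ?thesis by (simp add: e[abs_def] C_def[symmetric] diff_divide_distrib)
qed

lemma int_interval:
  fixes g :: "real \<Rightarrow> complex"
  assumes "continuous_on UNIV g" "a \<le> b"
  shows "set_integrable lebesgue {a<..<b} g" "(LINT x:{a<..<b}|lebesgue. g x) = integral {a..b} g"
proof -
  have "g absolutely_integrable_on {a..b}"
    by (rule absolutely_integrable_continuous_real) (rule continuous_on_subset[OF assms(1)], simp)
  then show si: "set_integrable lebesgue {a<..<b} g" by (rule set_integrable_subset) auto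
  show "(LINT x:{a<..<b}|lebesgue. g x) = integral {a..b} g"
    using set_lebesgue_integral_eq_integral(2)[OF si] by (simp add: integral_open_interval_real)
qed

lemma pw_in:
  assumes disj: "\<forall>j<n. \<forall>k<n. j \<noteq> k \<longrightarrow> {a j<..<b j} \<inter> {a k<..<b k} = {}"
    and j: "j < n" and x: "x \<in> {a j<..<b j}"
  shows "pw n a b c x = c j"
proof -
  have "pw n a b c x = (\<Sum>k<n. if k = j then c j else 0)"
    unfolding pw_def
  proof (rule sum.cong)
    fix k assume k: "k \<in> {..<n}"
    show "of_real (indicator {a k<..<b k} x) * c k = (if k = j then c j else 0)"
    proof (cases "k = j")
      case False
      then have "x \<notin> {a k<..<b k}" using disj j k x by blast
      then show ?thesis using False by simp
    qed (use x in simp)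
  qed simp
  also have "\<dots> = c j" using j by (simp add: sum.delta)
  finally show ?thesis .
qed

lemma pw_out: "x \<notin> Om n a b \<Longrightarrow> pw n a b c x = 0"
  unfolding pw_def Om_def by (auto intro!: sum.neutral)

lemma int_pw:
  fixes g :: "real \<Rightarrow> complex"
  assumes ab: "\<forall>j<n. a j < b j" and g: "continuous_on UNIV g"
  shows "(LINT x|restrict_space lebesgue (Om n a b). pw n a b c x * g x) = (\<Sum>j<n. c j * integral {a j..b j} g)"
proof -
  let ?O = "Om n a b"
  have "(LINT x|restrict_space lebesgue ?O. pw n a b c x * g x)
      = (LINT x|lebesgue. indicator ?O x *\<^sub>R (pw n a b c x * g x))"
    by (rule integral_restrict_space) (simp add: Om_sets)
  also have "\<dots> = (LINT x|lebesgue. (\<Sum>j<n. c j * (indicator {a j<..<b j} x *\<^sub>R g x)))"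
  proof (rule Bochner_Integration.integral_cong)
    fix x :: real
    show "indicator ?O x *\<^sub>R (pw n a b c x * g x) = (\<Sum>j<n. c j * (indicator {a j<..<b j} x *\<^sub>R g x))"
    proof (cases "x \<in> ?O")
      case True
      then show ?thesis unfolding pw_def
        by (simp add: scaleR_conv_of_real sum_distrib_left sum_distrib_right ac_simps)
    next
      case False
      then have "x \<notin> {a j<..<b j}" if "j < n" for j using that unfolding Om_def by auto
      then show ?thesis using False by simp
    qed
  qed simp
  also have "\<dots> = (\<Sum>j<n. (LINT x|lebesgue. c j * (indicator {a j<..<b j} x *\<^sub>R g x)))"
  proof (rule Bochner_Integration.integral_sum)
    fix j assume "j \<in> {..<n}"
    then have "set_integrable lebesgue {a j<..<b j} g" using int_interval(1)[OF g, of "a j" "b j"] ab by auto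
    then show "integrable lebesgue (\<lambda>x. c j * (indicator {a j<..<b j} x *\<^sub>R g x))"
      unfolding set_integrable_def by (rule integrable_mult_right)
  qed
  also have "\<dots> = (\<Sum>j<n. c j * integral {a j..b j} g)"
  proof (rule sum.cong)
    fix j assume "j \<in> {..<n}"
    then have 1: "(LINT x:{a j<..<b j}|lebesgue. g x) = integral {a j..b j} g"
      using int_interval(2)[OF g, of "a j" "b j"] ab by auto
    have 2: "(LINT x|lebesgue. c j * (indicator {a j<..<b j} x *\<^sub>R g x)) = c j * (LINT x|lebesgue. indicator {a j<..<b j} x *\<^sub>R g x)"
      by (rule integral_mult_right_zero)
    show "(LINT x|lebesgue. c j * (indicator {a j<..<b j} x *\<^sub>R g x)) = c j * integral {a j..b j} g"
      using 1 2 unfolding set_lebesgue_integral_def by (simp only:)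
  qed simp
  finally show ?thesis .
qed

lemma cont_meas_leb: "continuous_on UNIV (g::real\<Rightarrow>'b::euclidean_space) \<Longrightarrow> g \<in> borel_measurable lebesgue"
  by (intro measurable_completion) (simp add: measurable_lborel1 borel_measurable_continuous_onI)

lemma cont_meas_M: "continuous_on UNIV (g::real\<Rightarrow>'b::euclidean_space) \<Longrightarrow> g \<in> borel_measurable (restrict_space lebesgue S)"
  by (intro measurable_restrict_space1 cont_meas_leb)

lemma pw_meas: "pw n a b c \<in> borel_measurable (restrict_space lebesgue S)"
proof -
  have [measurable]: "{a j<..<b j} \<in> sets lebesgue" for j by simp
  have "pw n a b c \<in> borel_measurable lebesgue" unfolding pw_def[abs_def] by measurable
  then show ?thesis by (rule measurable_restrict_space1)
qed

definition RR :: "nat \<Rightarrow> (nat\<Rightarrow>real) \<Rightarrow> (nat\<Rightarrow>real) \<Rightarrow> real" where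
  "RR n a b = (\<Sum>j<n. \<bar>a j\<bar> + \<bar>b j\<bar>) + 1"

lemma RR_pos: "0 < RR n a b"
  unfolding RR_def by (smt (verit) sum_nonneg abs_ge_zero)

lemma Om_bound: assumes "x \<in> Om n a b" shows "\<bar>x\<bar> \<le> RR n a b"
proof -
  obtain j where j: "j < n" "a j < x" "x < b j" using assms unfolding Om_def by auto
  have "\<bar>a j\<bar> + \<bar>b j\<bar> \<le> (\<Sum>j<n. \<bar>a j\<bar> + \<bar>b j\<bar>)"
    by (rule member_le_sum) (use j in auto)
  then show ?thesis using j unfolding RR_def by linarith
qed

lemma integrable_M_cont:
  fixes g :: "real \<Rightarrow> 'b::euclidean_space"
  assumes "continuous_on UNIV g"
  shows "integrable (restrict_space lebesgue (Om n a b)) g"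
proof -
  have "g absolutely_integrable_on {- RR n a b..RR n a b}"
    by (rule absolutely_integrable_continuous_real) (rule continuous_on_subset[OF assms], simp)
  then have "set_integrable lebesgue (Om n a b) g"
  proof (rule set_integrable_subset)
    show "Om n a b \<subseteq> {- RR n a b..RR n a b}"
    proof
      fix x assume "x \<in> Om n a b"
      from Om_bound[OF this] show "x \<in> {- RR n a b..RR n a b}" by (simp add: abs_le_iff)
    qed
  qed (rule Om_sets)
  then show ?thesis
    by (subst integrable_restrict_space) (auto simp: Om_sets set_integrable_def)
qed

lemma L2_expo: "L2 (restrict_space lebesgue (Om n a b)) (expo l)"
  unfolding L2_def using continuous_expo[of l]
  by (auto intro: cont_meas_M integrable_M_cont[of "\<lambda>_. 1::real", simplified])

definition tf :: "nat \<Rightarrow> (nat\<Rightarrow>real) \<Rightarrow> (nat\<Rightarrow>real) \<Rightarrow> real \<Rightarrow> (nat \<Rightarrow> complex) \<Rightarrow> real \<Rightarrow> complex" where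
  "tf n a b \<xi> c x = expo \<xi> x * pw n a b c x"

lemma pw_bound: "cmod (pw n a b c x) \<le> (\<Sum>j<n. cmod (c j))"
  unfolding pw_def
  by (rule order_trans[OF norm_sum], rule sum_mono) (simp add: norm_mult indicator_def)

lemma L2_tf: "L2 (restrict_space lebesgue (Om n a b)) (tf n a b \<xi> c)"
  unfolding L2_def
proof
  let ?M = "restrict_space lebesgue (Om n a b)"
  show m: "tf n a b \<xi> c \<in> borel_measurable ?M"
    unfolding tf_def[abs_def] using pw_meas cont_meas_M[OF continuous_expo]
    by (intro borel_measurable_times) auto
  show "integrable ?M (\<lambda>x. (cmod (tf n a b \<xi> c x))\<^sup>2)"
  proof (rule Bochner_Integration.integrable_bound)
    show "integrable ?M (\<lambda>x. (\<Sum>j<n. cmod (c j))\<^sup>2)"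
      by (rule integrable_M_cont) simp
    show "(\<lambda>x. (cmod (tf n a b \<xi> c x))\<^sup>2) \<in> borel_measurable ?M" using m by measurable
    show "AE x in ?M. norm ((cmod (tf n a b \<xi> c x))\<^sup>2) \<le> norm ((\<Sum>j<n. cmod (c j))\<^sup>2)"
      by (rule AE_I2) (simp add: tf_def norm_mult power_mono pw_bound)
  qed
qed

lemma pw_one: assumes disj: "\<forall>j<n. \<forall>k<n. j \<noteq> k \<longrightarrow> {a j<..<b j} \<inter> {a k<..<b k} = {}"
  and "x \<in> Om n a b" shows "pw n a b (\<lambda>_. 1) x = 1"
  using assms pw_in[OF disj] unfolding Om_def by auto

lemma ip_expo_expo:
  assumes ab: "\<forall>j<n. a j < b j" and disj: "\<forall>j<n. \<forall>k<n. j \<noteq> k \<longrightarrow> {a j<..<b j} \<inter> {a k<..<b k} = {}"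
  shows "ip (restrict_space lebesgue (Om n a b)) (expo l) (expo m) = (\<Sum>j<n. integral {a j..b j} (expo (l - m)))"
proof -
  have "ip (restrict_space lebesgue (Om n a b)) (expo l) (expo m)
      = (LINT x|restrict_space lebesgue (Om n a b). pw n a b (\<lambda>_. 1) x * expo (l - m) x)"
    unfolding ip_def
    by (rule Bochner_Integration.integral_cong) (simp_all add: space_M pw_one[OF disj] expo_mult_cnj)
  also have "\<dots> = (\<Sum>j<n. integral {a j..b j} (expo (l - m)))"
    using int_pw[OF ab continuous_expo] by simp
  finally show ?thesis .
qed

lemma ip_tf_expo:
  assumes ab: "\<forall>j<n. a j < b j"
  shows "ip (restrict_space lebesgue (Om n a b)) (tf n a b \<xi> c) (expo l) = (\<Sum>j<n. c j * integral {a j..b j} (expo (\<xi> - l)))"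
proof -
  have "ip (restrict_space lebesgue (Om n a b)) (tf n a b \<xi> c) (expo l)
      = (LINT x|restrict_space lebesgue (Om n a b). pw n a b c x * expo (\<xi> - l) x)"
    unfolding ip_def tf_def
    by (rule Bochner_Integration.integral_cong) (simp_all add: expo_mult_cnj[symmetric] ac_simps)
  also have "\<dots> = (\<Sum>j<n. c j * integral {a j..b j} (expo (\<xi> - l)))"
    using int_pw[OF ab continuous_expo] by simp
  finally show ?thesis .
qed

lemma nr_tf:
  assumes ab: "\<forall>j<n. a j < b j" and disj: "\<forall>j<n. \<forall>k<n. j \<noteq> k \<longrightarrow> {a j<..<b j} \<inter> {a k<..<b k} = {}"
  shows "nr (restrict_space lebesgue (Om n a b)) (tf n a b \<xi> c) = (\<Sum>j<n. (cmod (c j))\<^sup>2 * (b j - a j))"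
proof -
  let ?M = "restrict_space lebesgue (Om n a b)"
  have "complex_of_real (nr ?M (tf n a b \<xi> c)) = ip ?M (tf n a b \<xi> c) (tf n a b \<xi> c)"
    by (simp add: ip_self)
  also have "\<dots> = (LINT x|?M. pw n a b (\<lambda>j. c j * cnj (c j)) x * (\<lambda>_. 1) x)"
    unfolding ip_def
  proof (rule Bochner_Integration.integral_cong)
    fix x assume "x \<in> space ?M"
    then obtain j where j: "j < n" "x \<in> {a j<..<b j}" unfolding space_M Om_def by auto
    have e: "expo \<xi> x * cnj (expo \<xi> x) = 1" using expo_mult_cnj[of \<xi> x \<xi>] by simp
    show "tf n a b \<xi> c x * cnj (tf n a b \<xi> c x) = pw n a b (\<lambda>j. c j * cnj (c j)) x * 1"
      unfolding tf_def pw_in[OF disj j] using e by (simp add: ac_simps)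
  qed simp
  also have "\<dots> = (\<Sum>j<n. c j * cnj (c j) * integral {a j..b j} (\<lambda>_. 1))"
    by (rule int_pw[OF ab]) simp
  also have "\<dots> = of_real (\<Sum>j<n. (cmod (c j))\<^sup>2 * (b j - a j))"
    unfolding of_real_sum
  proof (rule sum.cong)
    fix j assume "j \<in> {..<n}"
    then have "a j \<le> b j" using ab by (simp add: less_imp_le)
    then show "c j * cnj (c j) * integral {a j..b j} (\<lambda>_. 1) = of_real ((cmod (c j))\<^sup>2 * (b j - a j))"
    proof -
      have "c j * cnj (c j) = of_real ((cmod (c j))\<^sup>2)" by (rule complex_norm_square[symmetric])
      then show ?thesis using \<open>a j \<le> b j\<close> by (simp add: integral_const_real content_real scaleR_conv_of_real)
    qed
  qed simp
  finally show ?thesis by (metis of_real_eq_iff)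
qed


lemma int_expo: "t \<noteq> 0 \<Longrightarrow> a \<le> b \<Longrightarrow> integral {a..b} (expo t) = (expo t b - expo t a) / (2 * of_real pi * \<i> * of_real t)"
  by (rule integral_unique[OF expo_hasint])

lemma expo_minus_one: "cmod (expo t x - 1) \<le> 2 * pi * \<bar>t\<bar> * \<bar>x\<bar>"
proof -
  have "cmod (expo t x - 1) = 2 * \<bar>sin (2 * pi * t * x / 2)\<bar>" unfolding expo_eq by (rule dist_exp_i_1)
  also have "\<dots> \<le> 2 * \<bar>2 * pi * t * x / 2\<bar>" using abs_sin_x_le_abs_x by simp
  also have "\<dots> = 2 * pi * \<bar>t\<bar> * \<bar>x\<bar>" by (simp add: abs_mult)
  finally show ?thesis .
qed

lemma K_close:
  assumes ab: "\<forall>j<n. a j < b j" and sum1: "(\<Sum>j<n. b j - a j) = 1"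
  shows "cmod ((\<Sum>j<n. integral {a j..b j} (expo t)) - 1) \<le> 2 * pi * \<bar>t\<bar> * RR n a b"
proof -
  let ?R = "RR n a b"
  have one: "(1::complex) = (\<Sum>j<n. of_real (b j - a j))" using sum1 by (metis of_real_1 of_real_sum)
  have eq: "(\<Sum>j<n. integral {a j..b j} (expo t)) - 1 = (\<Sum>j<n. integral {a j..b j} (\<lambda>x. expo t x - 1))"
  proof -
    have "(\<Sum>j<n. integral {a j..b j} (expo t)) - 1 = (\<Sum>j<n. integral {a j..b j} (expo t) - of_real (b j - a j))"
      by (subst one) (simp add: sum_subtractf)
    also have "\<dots> = (\<Sum>j<n. integral {a j..b j} (\<lambda>x. expo t x - 1))"
  proof (rule sum.cong)
    fix j assume j: "j \<in> {..<n}"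
    then have abj: "a j \<le> b j" using ab by (simp add: less_imp_le)
    have i1: "expo t integrable_on {a j..b j}"
      by (rule integrable_continuous_real, rule continuous_on_subset[OF continuous_expo]) simp
    have "integral {a j..b j} (\<lambda>x. expo t x - 1) = integral {a j..b j} (expo t) - integral {a j..b j} (\<lambda>x. 1)"
      by (rule integral_diff[OF i1], rule integrable_continuous_real) simp
    then show "integral {a j..b j} (expo t) - of_real (b j - a j) = integral {a j..b j} (\<lambda>x. expo t x - 1)"
      using abj by (simp add: integral_const_real content_real scaleR_conv_of_real)
  qed simp
    finally show ?thesis .
  qed
  have bnd: "cmod (integral {a j..b j} (\<lambda>x. expo t x - 1)) \<le> 2 * pi * \<bar>t\<bar> * ?R * (b j - a j)" if j: "j < n" for j
  proof -
    have abj: "a j \<le> b j" using ab j by (simp add: less_imp_le)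
    have "\<bar>a j\<bar> + \<bar>b j\<bar> \<le> (\<Sum>j<n. \<bar>a j\<bar> + \<bar>b j\<bar>)"
      by (rule member_le_sum) (use j in auto)
    then have aR: "\<bar>a j\<bar> \<le> ?R" "\<bar>b j\<bar> \<le> ?R" unfolding RR_def by linarith+
    have "norm (integral (cbox (a j) (b j)) (\<lambda>x. expo t x - 1)) \<le> (2 * pi * \<bar>t\<bar> * ?R) * Henstock_Kurzweil_Integration.content (cbox (a j) (b j))"
    proof (rule integrable_bound)
      show "0 \<le> 2 * pi * \<bar>t\<bar> * ?R" using RR_pos[of n a b] by simp
      show "(\<lambda>x. expo t x - 1) integrable_on cbox (a j) (b j)"
        by (simp, rule integrable_continuous_real, intro continuous_intros continuous_on_subset[OF continuous_expo]) simp
      fix x assume "x \<in> cbox (a j) (b j)"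
      then have "\<bar>x\<bar> \<le> ?R" using aR by auto
      then have "2 * pi * \<bar>t\<bar> * \<bar>x\<bar> \<le> 2 * pi * \<bar>t\<bar> * ?R" by (intro mult_left_mono) auto
      then show "norm (expo t x - 1) \<le> 2 * pi * \<bar>t\<bar> * ?R" using expo_minus_one[of t x] by linarith
    qed
    then show ?thesis using abj by (simp add: content_real)
  qed
  have "cmod ((\<Sum>j<n. integral {a j..b j} (expo t)) - 1) \<le> (\<Sum>j<n. cmod (integral {a j..b j} (\<lambda>x. expo t x - 1)))"
    unfolding eq by (rule norm_sum)
  also have "\<dots> \<le> (\<Sum>j<n. 2 * pi * \<bar>t\<bar> * ?R * (b j - a j))" by (intro sum_mono bnd) auto
  also have "\<dots> = 2 * pi * \<bar>t\<bar> * ?R" using sum1 by (simp add: sum_distrib_left[symmetric])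
  finally show ?thesis .
qed

lemma phi_lo: "k < n \<Longrightarrow> phi n a b l k = expo (- l) (a k)"
  unfolding phi_def expo_def by (simp add: algebra_simps)

lemma phi_hi: "j < n \<Longrightarrow> phi n a b l (n + j) = expo (- l) (b j)"
  unfolding phi_def expo_def by (simp add: algebra_simps)

lemma phi_zero: "2 * n \<le> k \<Longrightarrow> phi n a b l k = 0"
  unfolding phi_def by simp

lemma cnj_expo_mult: "cnj (expo (- l) y) * expo (- m) y = expo (l - m) y"
  unfolding cnj_expo by (simp flip: expo_add)

lemma Qf_phi: "Qf n (phi n a b l) (phi n a b m) = (\<Sum>j<n. expo (l - m) (b j) - expo (l - m) (a j))"
  unfolding Qf_def by (rule sum.cong) (simp_all add: phi_lo phi_hi cnj_expo_mult)

definition Lfun :: "nat \<Rightarrow> (nat\<Rightarrow>real) \<Rightarrow> (nat\<Rightarrow>real) \<Rightarrow> real \<Rightarrow> (nat \<Rightarrow> complex) \<Rightarrow> (nat \<Rightarrow> complex) \<Rightarrow> complex" where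
  "Lfun n a b \<xi> c w = (\<Sum>j<n. c j * (expo \<xi> (b j) * w (n + j) - expo \<xi> (a j) * w j))"

lemma Lfun_phi: "Lfun n a b \<xi> c (phi n a b l) = (\<Sum>j<n. c j * (expo (\<xi> - l) (b j) - expo (\<xi> - l) (a j)))"
  unfolding Lfun_def by (rule sum.cong) (simp_all add: phi_lo phi_hi flip: expo_add)

lemma Lfun_bound: "cmod (Lfun n a b \<xi> c (phi n a b l)) \<le> 2 * (\<Sum>j<n. cmod (c j))"
proof -
  have "cmod (Lfun n a b \<xi> c (phi n a b l)) \<le> (\<Sum>j<n. cmod (c j * (expo (\<xi> - l) (b j) - expo (\<xi> - l) (a j))))"
    unfolding Lfun_phi by (rule norm_sum)
  also have "\<dots> \<le> (\<Sum>j<n. 2 * cmod (c j))"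
  proof (rule sum_mono)
    fix j
    have "cmod (expo (\<xi> - l) (b j) - expo (\<xi> - l) (a j)) \<le> 2"
      using norm_triangle_ineq4[of "expo (\<xi> - l) (b j)" "expo (\<xi> - l) (a j)"] by simp
    note h = this
    show "cmod (c j * (expo (\<xi> - l) (b j) - expo (\<xi> - l) (a j))) \<le> 2 * cmod (c j)"
      using mult_left_mono[OF h, of "cmod (c j)"] by (simp add: norm_mult mult.commute)
  qed
  finally show ?thesis by (simp add: sum_distrib_left)
qed

lemma Lfun_add_c: "Lfun n a b \<xi> (c1 + c2) w = Lfun n a b \<xi> c1 w + Lfun n a b \<xi> c2 w"
  unfolding Lfun_def sum.distrib[symmetric] by (rule sum.cong) (simp_all add: algebra_simps)

lemma Lfun_scl_c: "Lfun n a b \<xi> (scl k c) w = k * Lfun n a b \<xi> c w"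
  unfolding Lfun_def scl_def sum_distrib_left by (rule sum.cong) (simp_all add: algebra_simps)

lemma Lfun_sub: "FV.subspace {w. Lfun n a b \<xi> c w = 0}"
  unfolding FV.subspace_def Lfun_def
  by (auto simp: scl_def algebra_simps sum.distrib sum_distrib_left[symmetric] sum_subtractf)

lemma ip_tf_coef:
  assumes ab: "\<forall>j<n. a j < b j" and ne: "\<xi> \<noteq> l"
  shows "ip (restrict_space lebesgue (Om n a b)) (tf n a b \<xi> c) (expo l)
       = Lfun n a b \<xi> c (phi n a b l) / (2 * of_real pi * \<i> * of_real (\<xi> - l))"
  unfolding ip_tf_expo[OF ab] Lfun_phi sum_divide_distrib
proof (rule sum.cong)
  fix j assume "j \<in> {..<n}"
  then have "a j \<le> b j" using ab by (simp add: less_imp_le)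
  then show "c j * integral {a j..b j} (expo (\<xi> - l)) =
      c j * (expo (\<xi> - l) (b j) - expo (\<xi> - l) (a j)) / (2 * of_real pi * \<i> * of_real (\<xi> - l))"
    using ne by (simp add: int_expo)
qed simp


lemma window_finite:
  fixes L :: "real set"
  assumes sep: "\<forall>l\<in>L. \<forall>m\<in>L. l \<noteq> m \<longrightarrow> \<delta> \<le> \<bar>l - m\<bar>" and \<delta>: "0 < \<delta>"
  shows "finite (L \<inter> {x<..<y})"
proof -
  let ?f = "\<lambda>l. \<lfloor>l / \<delta>\<rfloor>"
  have inj: "inj_on ?f (L \<inter> {x<..<y})"
  proof (rule inj_onI)
    fix l m assume l: "l \<in> L \<inter> {x<..<y}" and m: "m \<in> L \<inter> {x<..<y}" and e: "?f l = ?f m"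
    have "\<bar>l / \<delta> - m / \<delta>\<bar> < 1" using e by linarith
    then have "\<bar>l - m\<bar> < \<delta>" using \<delta> by (simp add: diff_divide_distrib[symmetric] abs_divide divide_less_eq)
    then show "l = m" using sep l m by force
  qed
  have "?f ` (L \<inter> {x<..<y}) \<subseteq> {\<lfloor>x / \<delta>\<rfloor>..\<lfloor>y / \<delta>\<rfloor>}"
    using \<delta> by (auto intro!: floor_mono divide_right_mono)
  then have "finite (?f ` (L \<inter> {x<..<y}))" by (rule finite_subset) simp
  then show ?thesis using inj by (rule finite_imageD)
qed

lemma tail_sum:
  fixes L :: "real set"
  assumes sep: "\<forall>l\<in>L. \<forall>m\<in>L. l \<noteq> m \<longrightarrow> \<delta> \<le> \<bar>l - m\<bar>" and \<delta>: "0 < \<delta>" and R: "2 * \<delta> \<le> R"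
    and F: "finite F" "F \<subseteq> L" and far: "\<forall>l\<in>F. R \<le> \<bar>l - \<xi>\<bar>"
  shows "(\<Sum>l\<in>F. 1 / (l - \<xi>)\<^sup>2) \<le> 4 / (\<delta> * R)"
proof -
  define k where "k l = nat \<lfloor>(\<bar>l - \<xi>\<bar> - R) / \<delta>\<rfloor>" for l
  define u where "u i = 1 / (R + real i * \<delta>)\<^sup>2" for i :: nat
  have Rpos: "0 < R" using \<delta> R by linarith
  have kl: "R + real (k l) * \<delta> \<le> \<bar>l - \<xi>\<bar> \<and> \<bar>l - \<xi>\<bar> < R + (real (k l) + 1) * \<delta>" if l: "l \<in> F" for l
  proof -
    define q where "q = (\<bar>l - \<xi>\<bar> - R) / \<delta>"
    have q0: "0 \<le> q" using far l \<delta> by (simp add: q_def)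
    have rk: "real (k l) = of_int \<lfloor>q\<rfloor>" using q0 by (simp add: k_def q_def[symmetric])
    have 1: "of_int \<lfloor>q\<rfloor> \<le> q" "q < of_int \<lfloor>q\<rfloor> + 1" by linarith+
    have e: "\<bar>l - \<xi>\<bar> = R + q * \<delta>" using \<delta> by (simp add: q_def)
    show ?thesis unfolding e rk using 1 \<delta> by (auto intro: mult_right_mono mult_strict_right_mono)
  qed
  have upos: "0 \<le> u i" for i by (simp add: u_def)
  have gl: "1 / (l - \<xi>)\<^sup>2 \<le> u (k l)" if l: "l \<in> F" for l
  proof -
    have p: "0 < R + real (k l) * \<delta>" using Rpos \<delta> by (simp add: add_pos_nonneg)
    have "(R + real (k l) * \<delta>)\<^sup>2 \<le> (l - \<xi>)\<^sup>2"
      using kl[OF l] p by (metis abs_le_square_iff abs_of_pos)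
    moreover have "0 < (R + real (k l) * \<delta>)\<^sup>2" using p by simp
    ultimately have "0 < (l - \<xi>)\<^sup>2" by linarith
    with \<open>(R + real (k l) * \<delta>)\<^sup>2 \<le> (l - \<xi>)\<^sup>2\<close> \<open>0 < (R + real (k l) * \<delta>)\<^sup>2\<close>
    show ?thesis unfolding u_def by (intro divide_left_mono mult_pos_pos) auto
  qed
  have card_fib: "card {l\<in>F. k l = i} \<le> 2" for i
  proof -
    let ?S = "{l\<in>F. k l = i}"
    have one_side: "card {l\<in>?S. s * (l - \<xi>) > 0} \<le> 1" if s: "s = 1 \<or> s = -1" for s :: real
    proof -
      have "\<forall>l1\<in>{l\<in>?S. s * (l - \<xi>) > 0}. \<forall>l2\<in>{l\<in>?S. s * (l - \<xi>) > 0}. l1 = l2"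
      proof (intro ballI)
        fix l1 l2 assume l1: "l1 \<in> {l\<in>?S. s * (l - \<xi>) > 0}" and l2: "l2 \<in> {l\<in>?S. s * (l - \<xi>) > 0}"
        have a1: "\<bar>l1 - \<xi>\<bar> = s * (l1 - \<xi>)" "\<bar>l2 - \<xi>\<bar> = s * (l2 - \<xi>)" using l1 l2 s by auto
        have "R + real i * \<delta> \<le> \<bar>l1 - \<xi>\<bar>" "\<bar>l1 - \<xi>\<bar> < R + (real i + 1) * \<delta>"
             "R + real i * \<delta> \<le> \<bar>l2 - \<xi>\<bar>" "\<bar>l2 - \<xi>\<bar> < R + (real i + 1) * \<delta>"
          using kl[of l1] kl[of l2] l1 l2 by auto
        then have "\<bar>\<bar>l1 - \<xi>\<bar> - \<bar>l2 - \<xi>\<bar>\<bar> < \<delta>" by (simp add: algebra_simps)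
        moreover have "\<bar>\<bar>l1 - \<xi>\<bar> - \<bar>l2 - \<xi>\<bar>\<bar> = \<bar>l1 - l2\<bar>" unfolding a1 using s by auto
        ultimately have "\<bar>l1 - l2\<bar> < \<delta>" by simp
        then show "l1 = l2" using sep l1 l2 F by force
      qed
      moreover have fin: "finite {l\<in>?S. s * (l - \<xi>) > 0}" using F by auto
      ultimately show ?thesis using card_le_Suc0_iff_eq[OF fin] by (simp add: One_nat_def)
    qed
    have "?S \<subseteq> {l\<in>?S. 1 * (l - \<xi>) > 0} \<union> {l\<in>?S. -1 * (l - \<xi>) > 0}"
    proof
      fix l assume l: "l \<in> ?S"
      then have "l \<noteq> \<xi>" using far Rpos by force
      then show "l \<in> {l\<in>?S. 1 * (l - \<xi>) > 0} \<union> {l\<in>?S. -1 * (l - \<xi>) > 0}" using l by auto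
    qed
    then have "card ?S \<le> card ({l\<in>?S. 1 * (l - \<xi>) > 0} \<union> {l\<in>?S. -1 * (l - \<xi>) > 0})"
      using F by (intro card_mono) auto
    also have "\<dots> \<le> card {l\<in>?S. 1 * (l - \<xi>) > 0} + card {l\<in>?S. -1 * (l - \<xi>) > 0}" by (rule card_Un_le)
    also have "\<dots> \<le> 2" using one_side[of 1] one_side[of "-1"] by simp
    finally show ?thesis .
  qed
  obtain N where N: "k ` F \<subseteq> {..<N}" using finite_nat_bounded[OF finite_imageI[OF F(1)]] by blast
  define f where "f i = 1 / (\<delta> * (R - \<delta> + real i * \<delta>))" for i :: nat
  have tele: "u i \<le> f i - f (Suc i)" for i
  proof -
    define A where "A = R - \<delta> + real i * \<delta>"
    have A: "0 < A" using R \<delta> by (simp add: A_def add_pos_nonneg)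
    have f1: "f i = 1 / (\<delta> * A)" by (simp add: f_def A_def)
    have f2: "f (Suc i) = 1 / (\<delta> * (A + \<delta>))" by (simp add: f_def A_def algebra_simps)
    have nz: "A \<noteq> 0" "\<delta> \<noteq> 0" "A + \<delta> \<noteq> 0" using A \<delta> by auto
    have fi: "f i - f (Suc i) = 1 / (A * (A + \<delta>))"
    proof -
      have "1 / (\<delta> * A) - 1 / (\<delta> * (A + \<delta>)) = (1 * (\<delta> * (A + \<delta>)) - 1 * (\<delta> * A)) / ((\<delta> * A) * (\<delta> * (A + \<delta>)))"
        using nz by (intro diff_frac_eq) auto
      also have "\<dots> = (\<delta> * \<delta>) / ((\<delta> * \<delta>) * (A * (A + \<delta>)))" by (simp add: algebra_simps)
      also have "\<dots> = 1 / (A * (A + \<delta>))" using nz by simp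
      finally show ?thesis unfolding f1 f2 .
    qed
    have ui: "u i = 1 / ((A + \<delta>) * (A + \<delta>))" by (simp add: u_def A_def power2_eq_square algebra_simps)
    show ?thesis unfolding fi ui using A \<delta>
      by (intro divide_left_mono mult_right_mono mult_pos_pos) auto
  qed
  have "(\<Sum>l\<in>F. 1 / (l - \<xi>)\<^sup>2) \<le> (\<Sum>l\<in>F. u (k l))" by (rule sum_mono) (rule gl)
  also have "\<dots> = (\<Sum>i\<in>k ` F. \<Sum>l\<in>{l\<in>F. k l = i}. u (k l))" by (rule sum.image_gen[OF F(1)])
  also have "\<dots> = (\<Sum>i\<in>k ` F. real (card {l\<in>F. k l = i}) * u i)"
    by (rule sum.cong) (simp_all add: sum_constant_scale)
  also have "\<dots> \<le> (\<Sum>i\<in>k ` F. 2 * u i)"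
    by (intro sum_mono mult_right_mono upos) (use card_fib in \<open>simp add: of_nat_le_iff[symmetric]\<close>)
  also have "\<dots> \<le> (\<Sum>i<N. 2 * u i)" using N upos by (intro sum_mono2) auto
  also have "\<dots> \<le> (\<Sum>i<N. 2 * (f i - f (Suc i)))" by (intro sum_mono) (use tele in \<open>smt (verit)\<close>)
  also have "\<dots> = 2 * (f 0 - f N)" by (simp only: right_diff_distrib sum_lessThan_telescope'[of "\<lambda>i. 2 * f i"])
  also have "\<dots> \<le> 2 * f 0"
  proof -
    have "0 \<le> f N" unfolding f_def using R \<delta> by (simp add: add_pos_nonneg less_imp_le)
    then show ?thesis by simp
  qed
  also have "\<dots> \<le> 4 / (\<delta> * R)"
  proof -
    have "2 * f 0 = 2 / (\<delta> * (R - \<delta>))" by (simp add: f_def)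
    also have "\<dots> \<le> 2 / (\<delta> * (R / 2))"
      using R \<delta> by (intro divide_left_mono mult_left_mono mult_pos_pos) auto
    also have "\<dots> = 4 / (\<delta> * R)" by simp
    finally show ?thesis .
  qed
  finally show ?thesis .
qed


theorem lemma2:
  fixes n :: nat and a b :: "nat \<Rightarrow> real" and \<Lambda> :: "real set"
  assumes "\<forall>j<n. a j < b j"
    and "\<forall>j<n. \<forall>k<n. j \<noteq> k \<longrightarrow> {a j<..<b j} \<inter> {a k<..<b k} = {}"
    and "(\<Sum>j<n. b j - a j) = 1"
    and "is_spectrum (\<Union>j<n. {a j<..<b j}) \<Lambda>"
  shows "\<exists>T>0. \<forall>x. generating_set n a b \<Lambda> (\<Lambda> \<inter> {x<..<x+T})"
proof -
  note ab = assms(1) and disj = assms(2) and sum1 = assms(3) and spec = assms(4)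
  define \<Omega> where "\<Omega> = Om n a b"
  have \<Omega>eq: "(\<Union>j<n. {a j<..<b j}) = \<Omega>" by (simp add: \<Omega>_def Om_def)
  have \<Omega>s: "\<Omega> \<in> sets lebesgue" by (simp add: \<Omega>_def Om_sets)
  define M where "M = restrict_space lebesgue \<Omega>"
  have ipM: "ip M u v = (LINT x:\<Omega>|lebesgue. u x * cnj (v x))" for u v
    unfolding ip_def M_def set_lebesgue_integral_def using \<Omega>s by (intro integral_restrict_space) simp
  from spec have ortho0: "\<forall>l\<in>\<Lambda>. \<forall>m\<in>\<Lambda>. (LINT x:\<Omega>|lebesgue. expo l x * cnj (expo m x)) = (if l = m then 1 else 0)"
    and compl0: "\<forall>f :: real \<Rightarrow> complex. f \<in> borel_measurable lebesgue \<and> set_integrable lebesgue \<Omega> (\<lambda>x. (norm (f x))\<^sup>2) \<and>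
        (\<forall>l\<in>\<Lambda>. (LINT x:\<Omega>|lebesgue. f x * cnj (expo l x)) = 0) \<longrightarrow> (AE x in lebesgue. x \<in> \<Omega> \<longrightarrow> f x = 0)"
    unfolding is_spectrum_def \<Omega>eq by auto
  have ortho: "\<forall>l\<in>\<Lambda>. \<forall>m\<in>\<Lambda>. ip M (expo l) (expo m) = (if l = m then 1 else 0)" using ortho0 ipM by simp
  have EL2: "\<forall>l\<in>\<Lambda>. L2 M (expo l)" unfolding M_def \<Omega>_def using L2_expo by blast
  have compl: "\<forall>g. L2 M g \<and> (\<forall>l\<in>\<Lambda>. ip M g (expo l) = 0) \<longrightarrow> (AE x in M. g x = 0)"
  proof (intro allI impI)
    fix g assume g: "L2 M g \<and> (\<forall>l\<in>\<Lambda>. ip M g (expo l) = 0)"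
    define g' where "g' x = (if x \<in> \<Omega> then g x else 0)" for x
    have m1: "g' \<in> borel_measurable lebesgue"
      using g measurable_restrict_space_iff[of \<Omega> lebesgue 0 borel g] \<Omega>s unfolding g'_def[abs_def] L2_def M_def by simp
    have "integrable M (\<lambda>x. (cmod (g x))\<^sup>2)" using g by (simp add: L2_def)
    then have "integrable lebesgue (\<lambda>x. indicator \<Omega> x *\<^sub>R (cmod (g x))\<^sup>2)"
      using integrable_restrict_space[of \<Omega> lebesgue "\<lambda>x. (cmod (g x))\<^sup>2"] \<Omega>s unfolding M_def by simp
    moreover have "(\<lambda>x. indicator \<Omega> x *\<^sub>R (cmod (g x))\<^sup>2) = (\<lambda>x. indicator \<Omega> x *\<^sub>R (cmod (g' x))\<^sup>2)"
      by (auto simp: g'_def indicator_def fun_eq_iff)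
    ultimately have m2: "set_integrable lebesgue \<Omega> (\<lambda>x. (norm (g' x))\<^sup>2)" unfolding set_integrable_def by simp
    have m3: "\<forall>l\<in>\<Lambda>. (LINT x:\<Omega>|lebesgue. g' x * cnj (expo l x)) = 0"
    proof
      fix l assume "l \<in> \<Lambda>"
      then have "ip M g (expo l) = 0" using g by blast
      moreover have "(LINT x:\<Omega>|lebesgue. g' x * cnj (expo l x)) = (LINT x:\<Omega>|lebesgue. g x * cnj (expo l x))"
        unfolding set_lebesgue_integral_def
        by (rule Bochner_Integration.integral_cong) (auto simp: g'_def indicator_def)
      ultimately show "(LINT x:\<Omega>|lebesgue. g' x * cnj (expo l x)) = 0" using ipM by simp
    qed
    have "AE x in lebesgue. x \<in> \<Omega> \<longrightarrow> g' x = 0" using compl0 m1 m2 m3 by blast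
    then have "AE x in lebesgue. x \<in> \<Omega> \<longrightarrow> g x = 0" by (rule eventually_mono) (simp add: g'_def)
    then show "AE x in M. g x = 0" unfolding M_def using AE_restrict_space_iff[of \<Omega> lebesgue] \<Omega>s by simp
  qed
  define \<delta> where "\<delta> = 1 / (2 * pi * RR n a b)"
  have \<delta>pos: "0 < \<delta>" using RR_pos[of n a b] by (simp add: \<delta>_def)
  have ipK: "ip M (expo l) (expo m) = (\<Sum>j<n. integral {a j..b j} (expo (l - m)))" for l m
    unfolding M_def \<Omega>_def by (rule ip_expo_expo[OF ab disj])
  have sep: "\<forall>l\<in>\<Lambda>. \<forall>m\<in>\<Lambda>. l \<noteq> m \<longrightarrow> \<delta> \<le> \<bar>l - m\<bar>"
  proof (intro ballI impI)
    fix l m assume lm: "l \<in> \<Lambda>" "m \<in> \<Lambda>" "l \<noteq> m"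
    have "(\<Sum>j<n. integral {a j..b j} (expo (l - m))) = 0" using ortho lm ipK by auto
    then have "1 \<le> 2 * pi * \<bar>l - m\<bar> * RR n a b" using K_close[OF ab sum1, of "l - m"] by simp
    then show "\<delta> \<le> \<bar>l - m\<bar>" unfolding \<delta>_def using RR_pos[of n a b]
      by (simp add: divide_le_eq mult.commute mult.left_commute)
  qed
  have Qiso: "\<forall>v\<in>phi n a b ` \<Lambda>. \<forall>w\<in>phi n a b ` \<Lambda>. Qf n v w = 0"
  proof (intro ballI)
    fix v w assume "v \<in> phi n a b ` \<Lambda>" "w \<in> phi n a b ` \<Lambda>"
    then obtain l m where lm: "l \<in> \<Lambda>" "m \<in> \<Lambda>" "v = phi n a b l" "w = phi n a b m" by blast
    show "Qf n v w = 0"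
    proof (cases "l = m")
      case True then show ?thesis using lm by (simp add: Qf_phi)
    next
      case False
      have "(\<Sum>j<n. integral {a j..b j} (expo (l - m))) = 0" using ortho lm False ipK by auto
      moreover have "(\<Sum>j<n. integral {a j..b j} (expo (l - m)))
          = (\<Sum>j<n. expo (l - m) (b j) - expo (l - m) (a j)) / (2 * of_real pi * \<i> * of_real (l - m))"
        unfolding sum_divide_distrib using False ab by (intro sum.cong) (auto simp: int_expo less_imp_le)
      ultimately show ?thesis using lm False by (simp add: Qf_phi)
    qed
  qed
  have supp: "\<forall>v\<in>phi n a b ` \<Lambda>. \<forall>k\<ge>2*n. v k = 0" by (auto simp: phi_zero)
  have n1: "n \<noteq> 0" using sum1 by (metis lessThan_0 sum.empty zero_neq_one)
  define lm where "lm = Min ((\<lambda>j. b j - a j) ` {..<n})"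
  have lm_le: "lm \<le> b j - a j" if "j < n" for j unfolding lm_def using that by (intro Min_le) auto
  have lm_pos: "0 < lm" unfolding lm_def using n1 ab by (subst Min_gr_iff) auto
  define R0 where "R0 = 4 * real n / (\<delta> * lm) + 2 * \<delta> + 1"
  define T where "T = 2 * R0 + 2 * \<delta>"
  have R0pos: "0 < R0" unfolding R0_def using \<delta>pos lm_pos by (simp add: add_nonneg_pos)
  show ?thesis
  proof (intro exI[of _ T] conjI allI)
    show "T > 0" unfolding T_def using R0pos \<delta>pos by simp
    fix x
    define A where "A = \<Lambda> \<inter> {x<..<x+T}"
    show "generating_set n a b \<Lambda> (\<Lambda> \<inter> {x<..<x+T})"
      unfolding generating_set_def cspan_eq A_def[symmetric]
    proof (intro conjI)
      show "A \<subseteq> \<Lambda>" by (simp add: A_def)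
      show "FV.span (phi n a b ` A) = FV.span (phi n a b ` \<Lambda>)"
      proof (rule ccontr)
        assume neq: "FV.span (phi n a b ` A) \<noteq> FV.span (phi n a b ` \<Lambda>)"
        have sub: "FV.span (phi n a b ` A) \<subseteq> FV.span (phi n a b ` \<Lambda>)" by (intro FV.span_mono) (auto simp: A_def)
        have "\<exists>\<mu>\<in>\<Lambda>. phi n a b \<mu> \<notin> FV.span (phi n a b ` A)"
        proof (rule ccontr)
          assume "\<not> ?thesis"
          then have "phi n a b ` \<Lambda> \<subseteq> FV.span (phi n a b ` A)" by auto
          then have "FV.span (phi n a b ` \<Lambda>) \<subseteq> FV.span (phi n a b ` A)"
            by (intro FV.span_minimal) auto
          with sub neq show False by blast
        qed
        then obtain \<mu> where \<mu>: "\<mu> \<in> \<Lambda>" "phi n a b \<mu> \<notin> FV.span (phi n a b ` A)" by blast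
        have Afin: "finite A" unfolding A_def by (rule window_finite[OF sep \<delta>pos])
        obtain B where B: "B \<subseteq> phi n a b ` A" "FV.independent B" "phi n a b ` A \<subseteq> FV.span B"
          using FV.maximal_independent_subset[of "phi n a b ` A"] by blast
        have Bfin: "finite B" using Afin B(1) finite_subset by blast
        have spanB: "FV.span (phi n a b ` A) \<subseteq> FV.span B" using B(3) by (intro FV.span_minimal) auto
        have \<mu>B: "phi n a b \<mu> \<notin> FV.span B" using \<mu>(2) B(1) FV.span_mono by blast
        have \<mu>B': "phi n a b \<mu> \<notin> B" using \<mu>B FV.span_base by blast
        have BL: "B \<subseteq> phi n a b ` \<Lambda>" using B(1) by (auto simp: A_def)
        have "card (insert (phi n a b \<mu>) B) \<le> n"
        proof (rule iso_bound)
          show "finite (insert (phi n a b \<mu>) B)" using Bfin by simp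
          show "FV.independent (insert (phi n a b \<mu>) B)" by (rule FV.independent_insertI[OF \<mu>B B(2)])
          show "\<forall>v\<in>insert (phi n a b \<mu>) B. \<forall>w\<in>insert (phi n a b \<mu>) B. Qf n v w = 0"
            using Qiso BL \<mu>(1) by blast
          show "\<forall>v\<in>insert (phi n a b \<mu>) B. \<forall>k\<ge>2 * n. v k = 0" using supp BL \<mu>(1) by blast
        qed
        then have mlt: "card B < n" using \<mu>B' Bfin by simp
        define x0 where "x0 = x + T / 2"
        define \<xi> where "\<xi> = (if x0 \<in> \<Lambda> then x0 + \<delta> / 2 else x0)"
        have \<xi>L: "\<xi> \<notin> \<Lambda>"
        proof
          assume "\<xi> \<in> \<Lambda>"
          then have "x0 \<in> \<Lambda>" "x0 + \<delta> / 2 \<in> \<Lambda>" unfolding \<xi>_def by (auto split: if_splits)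
          then have "\<delta> \<le> \<bar>x0 - (x0 + \<delta> / 2)\<bar>" using sep \<delta>pos by force
          then show False using \<delta>pos by simp
        qed
        have \<xi>x: "x0 \<le> \<xi>" "\<xi> \<le> x0 + \<delta> / 2" using \<delta>pos by (auto simp: \<xi>_def)
        have far: "\<forall>l\<in>\<Lambda> - A. R0 \<le> \<bar>l - \<xi>\<bar>"
        proof
          fix l assume "l \<in> \<Lambda> - A"
          then have "l \<le> x \<or> x + T \<le> l" by (auto simp: A_def not_less)
          moreover have "- (l - \<xi>) \<le> \<bar>l - \<xi>\<bar>" "l - \<xi> \<le> \<bar>l - \<xi>\<bar>" by linarith+
          moreover have x0e: "x0 = x + R0 + \<delta>" "x + T = x + 2 * R0 + 2 * \<delta>" unfolding x0_def T_def by simp_all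
          ultimately show "R0 \<le> \<bar>l - \<xi>\<bar>" using \<xi>x \<delta>pos
            by (elim disjE) linarith+
        qed
        define m where "m = card B"
        obtain enum where enum: "bij_betw enum {0..<m} B" using ex_bij_betw_nat_finite[OF Bfin] m_def by blast
        define Mk where "Mk c = (\<lambda>i. if i < m then Lfun n a b \<xi> c (enum i) else 0)" for c
        have linMk: "Vector_Spaces.linear scl scl Mk"
          unfolding Vector_Spaces.linear_iff Mk_def
          by (auto simp: vs_scl fun_eq_iff Lfun_add_c Lfun_scl_c; simp add: scl_def)
        have "\<not> (\<forall>y\<in>FV.span (unit ` {..<n}). Mk y = 0 \<longrightarrow> y = 0)"
        proof
          assume H: "\<forall>y\<in>FV.span (unit ` {..<n}). Mk y = 0 \<longrightarrow> y = 0"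
          have "card (unit ` {..<n}) \<le> card (unit ` {..<m})"
          proof (rule dimcount[OF _ independent_units linMk _ _ H])
            show "Mk ` unit ` {..<n} \<subseteq> FV.span (unit ` {..<m})"
              by (auto intro!: supported_in_span_units simp: Mk_def)
          qed auto
          with mlt show False by (simp add: card_units m_def)
        qed
        then obtain c where c1: "c \<in> FV.span (unit ` {..<n})" "Mk c = 0" "c \<noteq> 0" by blast
        have cj: "\<exists>j<n. c j \<noteq> 0"
        proof (rule ccontr)
          assume "\<not> ?thesis"
          moreover have "\<forall>k\<ge>n. c k = 0" by (rule span_units_supported[OF c1(1)])
          ultimately have "c = 0" by (auto simp: fun_eq_iff not_less)
          with c1(3) show False by simp
        qed
        have cB: "\<forall>w\<in>B. Lfun n a b \<xi> c w = 0"
        proof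
          fix w assume "w \<in> B"
          then obtain i where i: "i < m" "w = enum i" using enum unfolding bij_betw_def by auto
          have "Mk c i = 0" using c1(2) by simp
          then show "Lfun n a b \<xi> c w = 0" using i by (simp add: Mk_def)
        qed
        have cA: "\<forall>l\<in>A. Lfun n a b \<xi> c (phi n a b l) = 0"
        proof
          fix l assume "l \<in> A"
          then have "phi n a b l \<in> FV.span B" using B(3) by blast
          moreover have "FV.span B \<subseteq> {w. Lfun n a b \<xi> c w = 0}"
            using cB by (intro FV.span_minimal Lfun_sub) auto
          ultimately show "Lfun n a b \<xi> c (phi n a b l) = 0" by blast
        qed
        let ?f = "tf n a b \<xi> c"
        define S1 where "S1 = (\<Sum>j<n. cmod (c j))"
        define S2 where "S2 = (\<Sum>j<n. (cmod (c j))\<^sup>2)"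
        have S1pos: "0 \<le> S1" unfolding S1_def by (simp add: sum_nonneg)
        have S2pos: "0 < S2"
        proof -
          obtain j where j: "j < n" "c j \<noteq> 0" using cj by blast
          have "(cmod (c j))\<^sup>2 \<le> S2" unfolding S2_def by (rule member_le_sum) (use j in auto)
          then show ?thesis using j by (smt (verit) zero_less_power2 zero_less_norm_iff)
        qed
        have S1sq: "S1\<^sup>2 \<le> real n * S2"
          using Cauchy_Schwarz_ineq_sum[of "\<lambda>j. cmod (c j)" "\<lambda>j. 1" "{..<n}"] by (simp add: S1_def S2_def mult.commute)
        have coefA: "ip M ?f (expo l) = 0" if "l \<in> A" for l
        proof -
          have "l \<in> \<Lambda>" using that by (simp add: A_def)
          then have "\<xi> \<noteq> l" using \<xi>L by auto
          then show ?thesis using cA that unfolding M_def \<Omega>_def by (simp add: ip_tf_coef[OF ab])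
        qed
        have coef_bd: "(cmod (ip M ?f (expo l)))\<^sup>2 \<le> S1\<^sup>2 / (l - \<xi>)\<^sup>2" if l: "l \<in> \<Lambda>" for l
        proof -
          have ne: "\<xi> \<noteq> l" using l \<xi>L by auto
          have d: "cmod (2 * of_real pi * \<i> * of_real (\<xi> - l)) = 2 * pi * \<bar>l - \<xi>\<bar>"
            by (simp add: norm_mult abs_minus_commute del: of_real_diff flip: of_real_diff)
          have pos: "0 < 2 * pi * \<bar>l - \<xi>\<bar>" using ne by simp
          have "cmod (ip M ?f (expo l)) = cmod (Lfun n a b \<xi> c (phi n a b l)) / (2 * pi * \<bar>l - \<xi>\<bar>)"
            unfolding M_def \<Omega>_def ip_tf_coef[OF ab ne] norm_divide d ..
          also have "\<dots> \<le> (2 * S1) / (2 * pi * \<bar>l - \<xi>\<bar>)"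
            using Lfun_bound[of n a b \<xi> c l] pos unfolding S1_def by (intro divide_right_mono) auto
          also have "\<dots> \<le> S1 / \<bar>l - \<xi>\<bar>"
          proof -
            have "(2 * S1) / (2 * pi * \<bar>l - \<xi>\<bar>) = (S1 / \<bar>l - \<xi>\<bar>) / pi" by simp
            also have "\<dots> \<le> S1 / \<bar>l - \<xi>\<bar>"
            proof -
              have X0: "0 \<le> S1 / \<bar>l - \<xi>\<bar>" using S1pos by simp
              show ?thesis using divide_left_mono[of 1 pi "S1 / \<bar>l - \<xi>\<bar>"] X0 pi_gt3 by simp
            qed
            finally show ?thesis .
          qed
          finally have "cmod (ip M ?f (expo l)) \<le> S1 / \<bar>l - \<xi>\<bar>" .
          then have "(cmod (ip M ?f (expo l)))\<^sup>2 \<le> (S1 / \<bar>l - \<xi>\<bar>)\<^sup>2" by (intro power_mono) auto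
          also have "\<dots> = S1\<^sup>2 / (l - \<xi>)\<^sup>2" by (simp add: power_divide)
          finally show ?thesis .
        qed
        have R02: "2 * \<delta> \<le> R0" unfolding R0_def using \<delta>pos lm_pos by simp
        have Bd: "\<forall>F. finite F \<and> F \<subseteq> \<Lambda> \<longrightarrow> (\<Sum>l\<in>F. (cmod (ip M ?f (expo l)))\<^sup>2) \<le> S1\<^sup>2 * (4 / (\<delta> * R0))"
        proof (intro allI impI)
          fix F assume F: "finite F \<and> F \<subseteq> \<Lambda>"
          have "(\<Sum>l\<in>F. (cmod (ip M ?f (expo l)))\<^sup>2) = (\<Sum>l\<in>F - A. (cmod (ip M ?f (expo l)))\<^sup>2)"
            using F coefA by (intro sum.mono_neutral_right) auto
          also have "\<dots> \<le> (\<Sum>l\<in>F - A. S1\<^sup>2 / (l - \<xi>)\<^sup>2)" using F by (intro sum_mono coef_bd) auto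
          also have "\<dots> = S1\<^sup>2 * (\<Sum>l\<in>F - A. 1 / (l - \<xi>)\<^sup>2)" by (simp add: sum_distrib_left)
          also have "\<dots> \<le> S1\<^sup>2 * (4 / (\<delta> * R0))"
            using F far by (intro mult_left_mono tail_sum[OF sep \<delta>pos R02]) auto
          finally show "(\<Sum>l\<in>F. (cmod (ip M ?f (expo l)))\<^sup>2) \<le> S1\<^sup>2 * (4 / (\<delta> * R0))" .
        qed
        have L2f: "L2 M ?f" unfolding M_def \<Omega>_def by (rule L2_tf)
        have up: "nr M ?f \<le> S1\<^sup>2 * (4 / (\<delta> * R0))" by (rule parseval_lb[OF EL2 ortho compl L2f Bd])
        have low: "lm * S2 \<le> nr M ?f"
        proof -
          have "lm * S2 = (\<Sum>j<n. (cmod (c j))\<^sup>2 * lm)" by (simp add: S2_def sum_distrib_left mult.commute)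
          also have "\<dots> \<le> (\<Sum>j<n. (cmod (c j))\<^sup>2 * (b j - a j))" by (intro sum_mono mult_left_mono lm_le) auto
          also have "\<dots> = nr M ?f" unfolding M_def \<Omega>_def by (rule nr_tf[OF ab disj, symmetric])
          finally show ?thesis .
        qed
        define Q where "Q = 4 / (\<delta> * R0)"
        have Q0: "0 \<le> Q" unfolding Q_def using \<delta>pos R0pos by simp
        have "lm * S2 \<le> real n * S2 * Q"
          using low up mult_right_mono[OF S1sq Q0] unfolding Q_def[symmetric] by linarith
        then have "lm * S2 \<le> (real n * Q) * S2" by (simp add: ac_simps)
        then have "lm \<le> real n * Q" using S2pos by (rule mult_right_le_imp_le)
        then have "lm \<le> real n * (4 / (\<delta> * R0))" unfolding Q_def .
        then have "lm * (\<delta> * R0) \<le> 4 * real n" using \<delta>pos R0pos by (simp add: field_simps)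
        then have "R0 \<le> 4 * real n / (\<delta> * lm)" using \<delta>pos lm_pos by (simp add: field_simps)
        then show False unfolding R0_def using \<delta>pos by simp
      qed
    qed
  qed
qed


end
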